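(* Let $\Delta$ be a simplicial polytopal fan in $\mathbb{R}^d$ with ray generators $\mathbf{v}_1,\ldots,\mathbf{v}_n$, and let $\mathbf{u}^{(1)},\mathbf{u}^{(2)},\ldots\in\mathbb{S}^{d-1}$ be independently and uniformly chosen random directions. For $m\ge1$ let $U_m=(\mathbf{u}^{(1)},\ldots,\mathbf{u}^{(m)})^\mathsf{T}$. Then \[ \lim_{m\to\infty}\mathbb{P}\Big(|\hat{P}^\Delta(U_m,\mathbf{y})|=1\text{ for all }\mathbf{y}\in\mathbb{R}^m\Big)=1. \]
   Context: A fan is simplicial if every cone is generated by linearly independent vectors; polytopal if it is the normal fan of a polytope. $h_P(\mathbf{u})=\max_{\mathbf{x}\in P}\langle\mathbf{x},\mathbf{u}\rangle$. The deformation cone $\mathcal{P}(\Delta)$ is the set of polytopes whose normal fan is coarsened by $\Delta$, identified via support vectors $\mathbf{h}=(h_P(\mathbf{v}_i))_i$ with a closed polyhedral cone in $\mathbb{R}^n$. For $\mathbf{y}\in\mathbb{R}^m$, $\hat{P}^\Delta(U_m,\mathbf{y})\subseteq\mathbb{R}^n$ is the set of support vectors of polytopes $P\in\mathcal{P}(\Delta)$ minimizing $\frac1m\sum_{i=1}^m(h_P(\mathbf{u}^{(i)})-y^{(i)})^2$. *)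

theory Defs
  imports "HOL-Probability.Probability"
begin

definition polyhedral_cone :: "'a::euclidean_space set \<Rightarrow> bool" where
  "polyhedral_cone C \<longleftrightarrow> (\<exists>B. finite B \<and> C = convex_cone hull B)"

definition is_fan :: "'a::euclidean_space set set \<Rightarrow> bool" where
  "is_fan F \<longleftrightarrow> finite F \<and> F \<noteq> {} \<and> (\<forall>C\<in>F. polyhedral_cone C) \<and>
     (\<forall>C\<in>F. \<forall>G. G face_of C \<and> G \<noteq> {} \<longrightarrow> G \<in> F) \<and>
     (\<forall>C\<in>F. \<forall>D\<in>F. (C \<inter> D) face_of C \<and> (C \<inter> D) face_of D)"

definition simplicial_fan :: "'a::euclidean_space set set \<Rightarrow> bool" where
  "simplicial_fan F \<longleftrightarrow> is_fan F \<and> (\<forall>C\<in>F. \<exists>B. independent B \<and> C = convex_cone hull B)"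

definition is_polytope :: "'a::euclidean_space set \<Rightarrow> bool" where
  "is_polytope P \<longleftrightarrow> polytope P \<and> P \<noteq> {}"

definition support_fun :: "'a::euclidean_space set \<Rightarrow> 'a \<Rightarrow> real" where
  "support_fun P u = Sup ((\<lambda>x. x \<bullet> u) ` P)"

definition normal_cone :: "'a::euclidean_space set \<Rightarrow> 'a set \<Rightarrow> 'a set" where
  "normal_cone P F = {u. \<forall>x\<in>F. x \<bullet> u = support_fun P u}"

definition normal_fan :: "'a::euclidean_space set \<Rightarrow> 'a set set" where
  "normal_fan P = {normal_cone P G | G. G face_of P \<and> G \<noteq> {}}"

definition polytopal_fan :: "'a::euclidean_space set set \<Rightarrow> bool" where
  "polytopal_fan F \<longleftrightarrow> is_fan F \<and> (\<exists>P. is_polytope P \<and> F = normal_fan P)"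

definition fan_rays :: "'a::euclidean_space set set \<Rightarrow> 'a set set" where
  "fan_rays F = {C \<in> F. dim C = 1}"

definition coarsens :: "'a::euclidean_space set set \<Rightarrow> 'a set set \<Rightarrow> bool" where
  "coarsens N F \<longleftrightarrow> (\<forall>C\<in>N. \<exists>S\<subseteq>F. C = \<Union>S)"

(* deformation cone, as a set of polytopes *)
definition deformation_polytopes :: "'a::euclidean_space set set \<Rightarrow> 'a set set" where
  "deformation_polytopes F = {P. is_polytope P \<and> coarsens (normal_fan P) F}"

definition support_vector :: "('n \<Rightarrow> 'a::euclidean_space) \<Rightarrow> 'a set \<Rightarrow> ('n \<Rightarrow> real)" where
  "support_vector v P = (\<lambda>i. support_fun P (v i))"

definition ls_loss :: "(nat \<Rightarrow> 'a::euclidean_space) \<Rightarrow> nat \<Rightarrow> (nat \<Rightarrow> real) \<Rightarrow> 'a set \<Rightarrow> real" where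
  "ls_loss U m y P = (1 / real m) * (\<Sum>i<m. (support_fun P (U i) - y i)\<^sup>2)"

(* \<hat>P^\<Delta>(U_m, y): support vectors of minimizing polytopes in the deformation cone *)
definition lse :: "'a::euclidean_space set set \<Rightarrow> ('n \<Rightarrow> 'a) \<Rightarrow> (nat \<Rightarrow> 'a) \<Rightarrow> nat
                    \<Rightarrow> (nat \<Rightarrow> real) \<Rightarrow> ('n \<Rightarrow> real) set" where
  "lse F v U m y = {support_vector v P | P. P \<in> deformation_polytopes F \<and>
        (\<forall>Q \<in> deformation_polytopes F. ls_loss U m y P \<le> ls_loss U m y Q)}"

(* uniform (normalized surface) probability measure on the unit sphere S^{d-1}:
   radial projection of the uniform distribution on the unit ball *)
definition uniform_sphere :: "'a::euclidean_space measure" where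
  "uniform_sphere = distr (uniform_measure lborel (ball 0 1)) borel (\<lambda>x. x /\<^sub>R norm x)"

end

theory Submission
  imports Defs
begin


lemma convex_cone_sum:
  assumes "convex_cone T" "finite A" "\<And>x. x \<in> A \<Longrightarrow> f x \<in> T"
  shows "sum f A \<in> T"
  using assms(2,3)
proof (induction A rule: finite_induct)
  case empty then show ?case using assms(1) by (simp add: convex_cone_contains_0)
next
  case (insert x A) then show ?case using assms(1) by (simp add: convex_cone_add)
qed

lemma cone_hull_finite:
  fixes S :: "'a::real_vector set" assumes fin: "finite S"
  shows "convex_cone hull S = {\<Sum>x\<in>S. c x *\<^sub>R x | c. \<forall>x\<in>S. 0 \<le> c x}"
proof (rule hull_unique)
  show "S \<subseteq> {\<Sum>x\<in>S. c x *\<^sub>R x | c. \<forall>x\<in>S. 0 \<le> c x}"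
  proof
    fix y assume y: "y \<in> S"
    have "(\<Sum>x\<in>S. (if x = y then 1 else 0) *\<^sub>R x) = y"
    proof -
      have "(\<Sum>x\<in>S. (if x = y then 1 else 0) *\<^sub>R x) = (\<Sum>x\<in>S. if x = y then y else 0)"
        by (rule sum.cong) auto
      also have "\<dots> = y" using fin y by (simp add: sum.delta')
      finally show ?thesis .
    qed
    then show "y \<in> {\<Sum>x\<in>S. c x *\<^sub>R x | c. \<forall>x\<in>S. 0 \<le> c x}"
      by (intro CollectI exI[of _ "\<lambda>x. if x = y then 1 else 0"]) auto
  qed
  show "convex_cone {\<Sum>x\<in>S. c x *\<^sub>R x | c. \<forall>x\<in>S. 0 \<le> c x}"
    unfolding convex_cone_iff
  proof (intro conjI ballI allI impI)
    show "0 \<in> {\<Sum>x\<in>S. c x *\<^sub>R x | c. \<forall>x\<in>S. 0 \<le> c x}"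
      by (rule CollectI, rule exI[of _ "\<lambda>_. 0"]) simp
  next
    fix x y assume "x \<in> {\<Sum>x\<in>S. c x *\<^sub>R x | c. \<forall>x\<in>S. 0 \<le> c x}" "y \<in> {\<Sum>x\<in>S. c x *\<^sub>R x | c. \<forall>x\<in>S. 0 \<le> c x}"
    then obtain c d where "x = (\<Sum>x\<in>S. c x *\<^sub>R x)" "\<forall>x\<in>S. 0 \<le> c x" "y = (\<Sum>x\<in>S. d x *\<^sub>R x)" "\<forall>x\<in>S. 0 \<le> d x" by auto
    then show "x + y \<in> {\<Sum>x\<in>S. c x *\<^sub>R x | c. \<forall>x\<in>S. 0 \<le> c x}"
      by (intro CollectI exI[of _ "\<lambda>x. c x + d x"]) (simp add: sum.distrib scaleR_add_left)
  next
    fix x and a :: real assume "x \<in> {\<Sum>x\<in>S. c x *\<^sub>R x | c. \<forall>x\<in>S. 0 \<le> c x}" "0 \<le> a"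
    then obtain c where "x = (\<Sum>x\<in>S. c x *\<^sub>R x)" "\<forall>x\<in>S. 0 \<le> c x" by auto
    then show "a *\<^sub>R x \<in> {\<Sum>x\<in>S. c x *\<^sub>R x | c. \<forall>x\<in>S. 0 \<le> c x}"
      using \<open>0 \<le> a\<close> by (intro CollectI exI[of _ "\<lambda>x. a * c x"]) (simp add: scaleR_sum_right)
  qed
  fix T assume "S \<subseteq> T" "convex_cone T"
  then show "{\<Sum>x\<in>S. c x *\<^sub>R x | c. \<forall>x\<in>S. 0 \<le> c x} \<subseteq> T"
    using fin by (auto intro!: convex_cone_sum convex_cone_scaleR)
qed

lemma cone_hull_singleton: "convex_cone hull {a} = {t *\<^sub>R a | t. 0 \<le> t}"
  by (auto simp: cone_hull_finite)

lemma cone_hull_singleton_scale: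
  assumes "0 < c" shows "convex_cone hull {c *\<^sub>R a} = convex_cone hull {a}"
proof -
  have "{t *\<^sub>R (c *\<^sub>R a) | t. 0 \<le> t} = {t *\<^sub>R a | t. 0 \<le> t}"
  proof safe
    fix t :: real assume "0 \<le> t" then show "\<exists>s. t *\<^sub>R c *\<^sub>R a = s *\<^sub>R a \<and> 0 \<le> s"
      using assms by (intro exI[of _ "t*c"]) auto
  next
    fix t :: real assume "0 \<le> t" then show "\<exists>s. t *\<^sub>R a = s *\<^sub>R c *\<^sub>R a \<and> 0 \<le> s"
      using assms by (intro exI[of _ "t/c"]) auto
  qed
  then show ?thesis by (simp add: cone_hull_singleton)
qed

definition fbasis :: "'a::euclidean_space set \<Rightarrow> bool" where
  "fbasis B \<longleftrightarrow> finite B \<and> card B = DIM('a) \<and> span B = UNIV"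

lemma fbasis_independent: "fbasis B \<Longrightarrow> independent B"
  using card_eq_dim[of B UNIV] unfolding fbasis_def by (simp add: dim_UNIV)

lemma fbasis_dual_ex:
  assumes "fbasis B" "b \<in> B"
  shows "\<exists>z. \<forall>b'\<in>B. z \<bullet> b' = (if b' = b then 1 else 0)"
proof -
  have fin: "finite B" and cB: "card B = DIM('a)" and sp: "span B = UNIV" using assms(1) by (auto simp: fbasis_def)
  have "dim (B - {b}) \<le> card (B - {b})" using fin by (simp add: dim_le_card')
  also have "\<dots> < DIM('a)" using cB assms(2) fin by (simp add: card_Diff_singleton)
  finally have lt: "dim (B - {b}) < DIM('a)" .
  have "span (B - {b}) \<noteq> UNIV"
  proof
    assume "span (B - {b}) = UNIV"
    then have "dim (span (B - {b})) = DIM('a)" by simp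
    then show False using lt by simp
  qed
  then obtain a :: 'a where a: "a \<noteq> 0" "\<forall>x\<in>span (B - {b}). a \<bullet> x = 0"
    using span_not_UNIV_orthogonal by blast
  have ab: "a \<bullet> b \<noteq> 0"
  proof
    assume "a \<bullet> b = 0"
    then have "\<forall>x\<in>B. a \<bullet> x = 0" using a(2) span_base[of _ "B - {b}"] by blast
    then have "\<forall>x\<in>span B. a \<bullet> x = 0" using orthogonal_to_span[of _ B a] unfolding orthogonal_def by blast
    then have "a \<bullet> a = 0" using sp by auto
    then show False using a(1) by simp
  qed
  show ?thesis
  proof (intro exI[of _ "a /\<^sub>R (a \<bullet> b)"] ballI)
    fix b' assume "b' \<in> B"
    then show "(a /\<^sub>R (a \<bullet> b)) \<bullet> b' = (if b' = b then 1 else 0)"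
      using ab a(2) by (auto simp: span_base)
  qed
qed

definition zz :: "'a::euclidean_space set \<Rightarrow> 'a \<Rightarrow> 'a" where
  "zz B b = (SOME z. \<forall>b'\<in>B. z \<bullet> b' = (if b' = b then 1 else 0))"

lemma zz_prop: "fbasis B \<Longrightarrow> b \<in> B \<Longrightarrow> b' \<in> B \<Longrightarrow> zz B b \<bullet> b' = (if b' = b then 1 else 0)"
  unfolding zz_def by (rule someI_ex[OF fbasis_dual_ex, rule_format])

lemma fbasis_expand:
  assumes "fbasis B" shows "u = (\<Sum>b\<in>B. (zz B b \<bullet> u) *\<^sub>R b)"
proof -
  have fin: "finite B" and sp: "span B = UNIV" using assms by (auto simp: fbasis_def)
  obtain c where u: "u = (\<Sum>b\<in>B. c b *\<^sub>R b)" using span_finite[OF fin] sp by (metis (no_types, lifting) UNIV_I imageE)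
  have "zz B b \<bullet> u = c b" if "b \<in> B" for b
  proof -
    have "zz B b \<bullet> u = (\<Sum>b'\<in>B. c b' * (zz B b \<bullet> b'))" by (simp add: u inner_sum_right)
    also have "\<dots> = (\<Sum>b'\<in>B. if b' = b then c b else 0)"
      by (rule sum.cong) (auto simp: zz_prop[OF assms that])
    also have "\<dots> = c b" using fin that by simp
    finally show ?thesis .
  qed
  then show ?thesis by (simp add: u cong: sum.cong)
qed

lemma fbasis_expand_dual:
  assumes "fbasis B" shows "x = (\<Sum>b\<in>B. (x \<bullet> b) *\<^sub>R zz B b)"
proof -
  have fin: "finite B" using assms by (auto simp: fbasis_def)
  define y where "y = x - (\<Sum>b\<in>B. (x \<bullet> b) *\<^sub>R zz B b)"
  have yb: "y \<bullet> b' = 0" if "b' \<in> B" for b'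
  proof -
    have "(\<Sum>b\<in>B. (x \<bullet> b) *\<^sub>R zz B b) \<bullet> b' = (\<Sum>b\<in>B. (x \<bullet> b) * (zz B b \<bullet> b'))"
      by (simp add: inner_sum_left)
    also have "\<dots> = (\<Sum>b\<in>B. if b = b' then x \<bullet> b' else 0)"
      by (rule sum.cong) (auto simp: zz_prop[OF assms _ that])
    also have "\<dots> = x \<bullet> b'" using fin that by simp
    finally show ?thesis by (simp add: y_def inner_diff_left)
  qed
  have "y \<bullet> y = (\<Sum>b\<in>B. (zz B b \<bullet> y) * (y \<bullet> b))"
    by (subst (2) fbasis_expand[OF assms, of y]) (simp add: inner_sum_right)
  also have "\<dots> = 0" by (simp add: yb)
  finally show ?thesis by (simp add: y_def)
qed

lemma fbasis_cone:
  assumes "fbasis B" shows "convex_cone hull B = {u. \<forall>b\<in>B. 0 \<le> zz B b \<bullet> u}"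
proof -
  have fin: "finite B" using assms by (auto simp: fbasis_def)
  show ?thesis
  proof safe
    fix u b assume "u \<in> convex_cone hull B" "b \<in> B"
    then obtain c where u: "u = (\<Sum>x\<in>B. c x *\<^sub>R x)" "\<forall>x\<in>B. 0 \<le> c x" using fin by (auto simp: cone_hull_finite)
    have "zz B b \<bullet> u = (\<Sum>x\<in>B. if x = b then c b else 0)"
      unfolding u(1) inner_sum_right by (rule sum.cong) (auto simp: zz_prop[OF assms \<open>b\<in>B\<close>])
    then show "0 \<le> zz B b \<bullet> u" using fin \<open>b\<in>B\<close> u(2) by simp
  next
    fix u assume "\<forall>b\<in>B. 0 \<le> zz B b \<bullet> u"
    then show "u \<in> convex_cone hull B" using fin fbasis_expand[OF assms, of u]
      by (auto simp: cone_hull_finite)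
  qed
qed


lemma sf_max:
  fixes P :: "'a::euclidean_space set"
  assumes "compact P" "P \<noteq> {}"
  shows "(\<forall>x\<in>P. x \<bullet> u \<le> support_fun P u) \<and> (\<exists>x\<in>P. x \<bullet> u = support_fun P u)"
proof -
  have c: "compact ((\<lambda>x. x \<bullet> u) ` P)"
    by (rule compact_continuous_image[OF _ assms(1)]) (intro continuous_intros)
  obtain y where y: "y \<in> P" "\<forall>x\<in>P. x \<bullet> u \<le> y \<bullet> u"
    using compact_attains_sup[OF c] assms(2) by auto
  have "support_fun P u = y \<bullet> u"
    unfolding support_fun_def by (rule cSup_eq_maximum) (use y in auto)
  then show ?thesis using y by auto
qed

lemma sf_attained:
  fixes P :: "'a::euclidean_space set"
  assumes "y \<in> P" "\<And>x. x \<in> P \<Longrightarrow> x \<bullet> u \<le> y \<bullet> u"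
  shows "support_fun P u = y \<bullet> u"
  unfolding support_fun_def by (rule cSup_eq_maximum) (use assms in auto)

lemma normal_fan_cover:
  fixes P :: "'a::euclidean_space set"
  assumes "is_polytope P"
  shows "\<exists>G. G face_of P \<and> G \<noteq> {} \<and> u \<in> normal_cone P G"
proof -
  have cp: "compact P" "P \<noteq> {}" "convex P" using assms
    by (auto simp: is_polytope_def polytope_imp_compact polytope_imp_convex)
  obtain y where y: "y \<in> P" "y \<bullet> u = support_fun P u" and le: "\<forall>x\<in>P. x \<bullet> u \<le> support_fun P u"
    using sf_max[OF cp(1,2)] by blast
  let ?G = "P \<inter> {x. u \<bullet> x = support_fun P u}"
  have "?G face_of P"
    by (rule face_of_Int_supporting_hyperplane_le) (use cp le in \<open>auto simp: inner_commute\<close>)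
  moreover have "?G \<noteq> {}" using y by (auto simp: inner_commute)
  moreover have "u \<in> normal_cone P ?G" by (auto simp: normal_cone_def inner_commute)
  ultimately show ?thesis by blast
qed

lemma normal_fan_Union:
  fixes P :: "'a::euclidean_space set"
  assumes "is_polytope P" shows "\<Union>(normal_fan P) = UNIV"
  using normal_fan_cover[OF assms] by (fastforce simp: normal_fan_def)

locale fan_setting =
  fixes F :: "'a::euclidean_space set set" and v :: "'n::finite \<Rightarrow> 'a"
  assumes simpF: "simplicial_fan F" and polyF: "polytopal_fan F"
    and bijv: "bij_betw (\<lambda>i. convex_cone hull {v i}) UNIV (fan_rays F)"
begin

definition ray :: "'n \<Rightarrow> 'a set" where "ray i = convex_cone hull {v i}"

lemma isfan: "is_fan F" using simpF by (simp add: simplicial_fan_def)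
lemma finF: "finite F" using isfan by (simp add: is_fan_def)
lemma face_in_F: "C \<in> F \<Longrightarrow> G face_of C \<Longrightarrow> G \<noteq> {} \<Longrightarrow> G \<in> F"
  using isfan by (simp add: is_fan_def)
lemma F_Int_face: "C \<in> F \<Longrightarrow> D \<in> F \<Longrightarrow> (C \<inter> D) face_of C"
  using isfan by (simp add: is_fan_def)

lemma ray_rays: "ray i \<in> fan_rays F"
  using bijv by (auto simp: bij_betw_def ray_def)

lemma ray_F: "ray i \<in> F" and ray_dim: "dim (ray i) = 1"
  using ray_rays[of i] by (auto simp: fan_rays_def)

lemma ray_inj: "ray i = ray j \<Longrightarrow> i = j"
  using bijv by (auto simp: bij_betw_def inj_on_def ray_def)

lemma ray_surj: "C \<in> F \<Longrightarrow> dim C = 1 \<Longrightarrow> \<exists>i. C = ray i"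
  using bijv by (auto simp: bij_betw_def ray_def fan_rays_def image_iff)

lemma v_nz: "v i \<noteq> 0"
proof
  assume "v i = 0"
  then have "ray i = {0}" by (auto simp: ray_def cone_hull_singleton)
  then show False using ray_dim[of i] by simp
qed

lemma ray_expl: "ray i = {t *\<^sub>R v i | t. 0 \<le> t}"
  by (simp add: ray_def cone_hull_singleton)

lemma ray_scale: "0 < c \<Longrightarrow> v k = c *\<^sub>R v i \<Longrightarrow> k = i"
proof -
  assume "0 < c" "v k = c *\<^sub>R v i"
  then have "ray k = ray i" using cone_hull_singleton_scale[of c "v i"] by (simp add: ray_def)
  then show "k = i" by (rule ray_inj)
qed

definition chamber :: "'n set \<Rightarrow> bool" where
  "chamber J \<longleftrightarrow> inj_on v J \<and> fbasis (v ` J) \<and> convex_cone hull (v ` J) \<in> F"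

definition cone :: "'n set \<Rightarrow> 'a set" where "cone J = convex_cone hull (v ` J)"

definition z :: "'n set \<Rightarrow> 'n \<Rightarrow> 'a" where "z J j = zz (v ` J) (v j)"

lemma finite_chambers: "finite {J. chamber J}" by simp

lemma chamber_cone_F: "chamber J \<Longrightarrow> cone J \<in> F"
  by (simp add: chamber_def cone_def)

lemma chamber_z: "chamber J \<Longrightarrow> j \<in> J \<Longrightarrow> k \<in> J \<Longrightarrow> z J j \<bullet> v k = (if k = j then 1 else 0)"
  unfolding chamber_def z_def
  by (subst zz_prop) (auto simp: inj_on_def)

lemma chamber_expand: assumes "chamber J" shows "u = (\<Sum>j\<in>J. (z J j \<bullet> u) *\<^sub>R v j)"
proof -
  have "u = (\<Sum>b\<in>v ` J. (zz (v ` J) b \<bullet> u) *\<^sub>R b)"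
    using assms by (intro fbasis_expand) (simp add: chamber_def)
  also have "\<dots> = (\<Sum>j\<in>J. (z J j \<bullet> u) *\<^sub>R v j)"
    using assms by (subst sum.reindex) (auto simp: chamber_def z_def)
  finally show ?thesis .
qed

lemma chamber_expand_dual: assumes "chamber J" shows "x = (\<Sum>j\<in>J. (x \<bullet> v j) *\<^sub>R z J j)"
proof -
  have "x = (\<Sum>b\<in>v ` J. (x \<bullet> b) *\<^sub>R zz (v ` J) b)"
    using assms by (intro fbasis_expand_dual) (simp add: chamber_def)
  also have "\<dots> = (\<Sum>j\<in>J. (x \<bullet> v j) *\<^sub>R z J j)"
    using assms by (subst sum.reindex) (auto simp: chamber_def z_def)
  finally show ?thesis .
qed

lemma chamber_cone: assumes "chamber J" shows "cone J = {u. \<forall>j\<in>J. 0 \<le> z J j \<bullet> u}"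
proof -
  have "cone J = {u. \<forall>b\<in>v ` J. 0 \<le> zz (v ` J) b \<bullet> u}"
    unfolding cone_def using assms by (intro fbasis_cone) (simp add: chamber_def)
  then show ?thesis by (simp add: z_def)
qed

lemma chamber_inner: "chamber J \<Longrightarrow> x \<bullet> u = (\<Sum>j\<in>J. (z J j \<bullet> u) * (x \<bullet> v j))"
  by (subst chamber_expand[of J u]) (auto simp: inner_sum_right)

lemma v_in_cone: "j \<in> J \<Longrightarrow> v j \<in> cone J"
  by (simp add: cone_def hull_inc)

lemma closed_cone: "chamber J \<Longrightarrow> closed (cone J)"
  unfolding cone_def by (rule closed_convex_cone_hull) (simp add: chamber_def fbasis_def)

lemma convex_cone_J: "convex (cone J)"
  by (simp add: cone_def convex_convex_cone_hull)

lemma full_cone_chamber: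
  assumes CF: "C \<in> F" and CB: "C = convex_cone hull B" and indB: "independent B" and cB: "card B = DIM('a)"
  shows "\<exists>J. chamber J \<and> C = cone J"
proof -
  have finB: "finite B" using indB by (simp add: finiteI_independent)
  have spB: "span B = UNIV" using card_eq_dim[of B UNIV] indB cB finB by (auto simp: dim_UNIV)
  have fB: "fbasis B" using finB cB spB by (simp add: fbasis_def)
  have nz: "b \<noteq> 0" if "b \<in> B" for b using indB that dependent_zero by blast
  have par: "b = b'" if "b \<in> B" "b' \<in> B" "b' = c *\<^sub>R b" for b b' c
  proof (rule ccontr)
    assume "b \<noteq> b'"
    then have "b \<in> B - {b'}" using that by auto
    then have "b' \<in> span (B - {b'})" using that(3) by (simp add: span_base span_mul)
    then show False using indB that(2) dependent_def by blast
  qed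
  have ray_b: "\<exists>i t. 0 < t \<and> b = t *\<^sub>R v i" if bB: "b \<in> B" for b
  proof -
    define a where "a = - (\<Sum>b'\<in>B - {b}. zz B b')"
    have Cz: "C = {u. \<forall>b\<in>B. 0 \<le> zz B b \<bullet> u}" using CB fbasis_cone[OF fB] by simp
    have le: "a \<bullet> x \<le> 0" if "x \<in> C" for x
      using that Cz by (auto simp: a_def inner_sum_left intro!: sum_nonneg)
    have face: "(C \<inter> {x. a \<bullet> x = 0}) face_of C"
      by (rule face_of_Int_supporting_hyperplane_le) (use le CB convex_convex_cone_hull in auto)
    have eq: "C \<inter> {x. a \<bullet> x = 0} = convex_cone hull {b}"
    proof safe
      fix x assume xC: "x \<in> C" and ax: "a \<bullet> x = 0"
      have "(\<Sum>b'\<in>B - {b}. zz B b' \<bullet> x) = 0" using ax by (simp add: a_def inner_sum_left)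
      then have z0: "\<forall>b'\<in>B - {b}. zz B b' \<bullet> x = 0"
        using xC Cz finB by (subst (asm) sum_nonneg_eq_0_iff) auto
      have "x = (\<Sum>b'\<in>B. (zz B b' \<bullet> x) *\<^sub>R b')" by (rule fbasis_expand[OF fB])
      also have "\<dots> = (\<Sum>b'\<in>B. if b' = b then (zz B b \<bullet> x) *\<^sub>R b else 0)"
        by (rule sum.cong) (use z0 in auto)
      also have "\<dots> = (zz B b \<bullet> x) *\<^sub>R b" using finB bB by simp
      finally show "x \<in> convex_cone hull {b}"
        using xC Cz bB by (auto simp: cone_hull_singleton)
    next
      fix x assume "x \<in> convex_cone hull {b}"
      then obtain t where t: "x = t *\<^sub>R b" "0 \<le> t" by (auto simp: cone_hull_singleton)
      show "x \<in> C" using t bB CB by (simp add: convex_cone_hull_mul hull_inc)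
      have "zz B b' \<bullet> b = 0" if "b' \<in> B - {b}" for b'
        using zz_prop[OF fB, of b' b] that bB by auto
      then show "a \<bullet> x = 0" by (simp add: t a_def inner_sum_left)
    qed
    have inF: "convex_cone hull {b} \<in> F"
      using face_in_F[OF CF face] eq by (simp add: convex_cone_hull_nonempty)
    have "dim (convex_cone hull {b}) = 1"
    proof -
      have "dim {b} \<le> dim (convex_cone hull {b})" by (rule dim_subset) (simp add: hull_inc)
      moreover have "convex_cone hull {b} \<subseteq> span {b}" by (auto simp: cone_hull_singleton span_mul span_base)
      then have "dim (convex_cone hull {b}) \<le> dim (span {b})" by (rule dim_subset)
      ultimately show ?thesis using nz[OF bB] by simp
    qed
    then obtain i where "convex_cone hull {b} = ray i" using ray_surj inF by blast
    then have "b \<in> ray i" by (metis hull_inc singletonI)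
    then obtain t where t: "b = t *\<^sub>R v i" "0 \<le> t" by (auto simp: ray_expl)
    then have "t \<noteq> 0" using nz[OF bB] by auto
    then show ?thesis using t by (intro exI[of _ i] exI[of _ t]) auto
  qed
  obtain \<phi> \<tau> where pt: "\<And>b. b \<in> B \<Longrightarrow> 0 < \<tau> b \<and> \<tau> b *\<^sub>R v (\<phi> b) = b"
  proof -
    have "\<forall>b\<in>B. \<exists>p. 0 < snd p \<and> snd p *\<^sub>R v (fst p) = b"
    proof
      fix b assume "b \<in> B"
      then obtain i t where "0 < t" "b = t *\<^sub>R v i" using ray_b by blast
      then show "\<exists>p. 0 < snd p \<and> snd p *\<^sub>R v (fst p) = b" by (intro exI[of _ "(i, t)"]) simp
    qed
    from bchoice[OF this] obtain f where f: "\<forall>b\<in>B. 0 < snd (f b) \<and> snd (f b) *\<^sub>R v (fst (f b)) = b"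
      by blast
    show ?thesis by (rule that[of "\<lambda>b. snd (f b)" "\<lambda>b. fst (f b)"]) (use f in auto)
  qed
  have vphi: "v (\<phi> b) = (1 / \<tau> b) *\<^sub>R b" if "b \<in> B" for b
  proof -
    obtain t w where tw: "t = \<tau> b" "w = v (\<phi> b)" by simp
    have t0: "0 < t" and tb: "t *\<^sub>R w = b" using pt[OF that] tw by auto
    have "(1 / t) *\<^sub>R b = (1 / t) *\<^sub>R (t *\<^sub>R w)" using tb by simp
    also have "\<dots> = w" using t0 by simp
    finally have "(1 / t) *\<^sub>R b = w" .
    then show ?thesis using tw by simp
  qed
  have injvphi: "inj_on (\<lambda>b. v (\<phi> b)) B"
  proof (rule inj_onI)
    fix b b' assume bb: "b \<in> B" "b' \<in> B" "v (\<phi> b) = v (\<phi> b')"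
    have "b' = \<tau> b' *\<^sub>R v (\<phi> b')" using pt[OF bb(2)] by auto
    also have "\<dots> = \<tau> b' *\<^sub>R ((1 / \<tau> b) *\<^sub>R b)" using vphi[OF bb(1)] bb(3) by simp
    finally have "b' = (\<tau> b' / \<tau> b) *\<^sub>R b" by simp
    then show "b = b'" using par bb by blast
  qed
  define J where "J = \<phi> ` B"
  have vJ: "v ` J = (\<lambda>b. v (\<phi> b)) ` B" by (auto simp: J_def)
  have injv: "inj_on v J"
  proof (rule inj_onI)
    fix i j assume "i \<in> J" "j \<in> J" "v i = v j"
    then obtain b b' where "b \<in> B" "b' \<in> B" "i = \<phi> b" "j = \<phi> b'" by (auto simp: J_def)
    then show "i = j" using injvphi \<open>v i = v j\<close> by (auto simp: inj_on_def)
  qed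
  have cardJ: "card (v ` J) = DIM('a)" using vJ card_image[OF injvphi] cB by simp
  have BvJ: "B \<subseteq> span (v ` J)"
  proof
    fix b assume "b \<in> B"
    then have "b = \<tau> b *\<^sub>R v (\<phi> b)" using pt by metis
    moreover have "v (\<phi> b) \<in> v ` J" using \<open>b \<in> B\<close> by (simp add: J_def)
    ultimately show "b \<in> span (v ` J)" by (metis span_base span_mul)
  qed
  have spJ: "span (v ` J) = UNIV"
    using span_mono[OF BvJ] spB by (auto simp: span_span)
  have fJ: "fbasis (v ` J)" using cardJ spJ by (simp add: fbasis_def J_def)
  have "convex_cone hull (v ` J) \<subseteq> C"
  proof (rule hull_minimal)
    show "v ` J \<subseteq> C"
    proof
      fix y assume "y \<in> v ` J"
      then obtain b where b: "b \<in> B" "y = v (\<phi> b)" using vJ by auto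
      then have "y = (1 / \<tau> b) *\<^sub>R b" using vphi by simp
      moreover have "0 < \<tau> b" using pt b by auto
      ultimately show "y \<in> C" using b CB by (simp add: convex_cone_hull_mul hull_inc)
    qed
    show "convex_cone C" using CB by (simp add: convex_cone_convex_cone_hull)
  qed
  moreover have "C \<subseteq> convex_cone hull (v ` J)"
    unfolding CB
  proof (rule hull_minimal)
    show "B \<subseteq> convex_cone hull (v ` J)"
    proof
      fix b assume "b \<in> B"
      then have e: "\<tau> b *\<^sub>R v (\<phi> b) = b" "0 < \<tau> b" using pt by auto
      have "v (\<phi> b) \<in> convex_cone hull (v ` J)" using \<open>b \<in> B\<close> by (simp add: J_def hull_inc)
      then have "\<tau> b *\<^sub>R v (\<phi> b) \<in> convex_cone hull (v ` J)" using e(2) by (simp add: convex_cone_hull_mul)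
      then show "b \<in> convex_cone hull (v ` J)" using e(1) by simp
    qed
  qed (simp add: convex_cone_convex_cone_hull)
  ultimately have "C = cone J" by (auto simp: cone_def)
  then show ?thesis using injv fJ CF by (intro exI[of _ J]) (simp add: chamber_def cone_def)
qed

lemma cover: "\<exists>J. chamber J \<and> u \<in> cone J"
proof -
  obtain P0 where P0: "is_polytope P0" "F = normal_fan P0" using polyF by (auto simp: polytopal_fan_def)
  have UF: "\<Union>F = UNIV" using normal_fan_Union[OF P0(1)] P0(2) by simp
  define M where "M = \<Union>{cone J | J. chamber J}"
  define N where "N = \<Union>{C \<in> F. negligible C}"
  have split: "C \<subseteq> M \<or> negligible C" if CF: "C \<in> F" for C
  proof -
    obtain B where B: "independent B" "C = convex_cone hull B"
      using simpF CF by (auto simp: simplicial_fan_def)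
    have "card B \<le> DIM('a)" using independent_bound B by blast
    then consider "card B = DIM('a)" | "card B < DIM('a)" by linarith
    then show ?thesis
    proof cases
      case 1 then show ?thesis using full_cone_chamber[OF CF B(2,1)] by (auto simp: M_def)
    next
      case 2
      have "C \<subseteq> span B" using B(2) by (simp add: hull_minimal span_superset subspace_imp_convex_cone)
      moreover have "negligible (span B)"
        by (rule negligible_lowdim) (use 2 in \<open>simp add: dim_eq_card_independent[OF B(1)]\<close>)
      ultimately show ?thesis using negligible_subset by blast
    qed
  qed
  have UMN: "UNIV \<subseteq> M \<union> N"
  proof
    fix x :: 'a
    obtain C where "C \<in> F" "x \<in> C" using UF by blast
    then show "x \<in> M \<union> N" using split[of C] by (auto simp: N_def)
  qed
  have "closed M" unfolding M_def
    by (rule closed_Union) (auto simp: closed_cone)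
  have negN: "negligible N" unfolding N_def using finF by (intro negligible_Union) auto
  show ?thesis
  proof (rule ccontr)
    assume "\<not> ?thesis"
    then have "u \<in> - M" by (auto simp: M_def)
    moreover have "open (- M)" using \<open>closed M\<close> by auto
    moreover have "- M \<subseteq> N" using UMN by auto
    ultimately show False using open_not_negligible[of "- M"] negligible_subset[OF negN] by blast
  qed
qed

lemma v_in_cone_imp: assumes J: "chamber J" and vi: "v i \<in> cone J" shows "i \<in> J"
proof -
  have face: "(cone J \<inter> ray i) face_of cone J" using F_Int_face[OF chamber_cone_F[OF J] ray_F] .
  have lam: "0 \<le> z J j \<bullet> v i" if "j \<in> J" for j using vi that chamber_cone[OF J] by auto
  have "\<exists>k\<in>J. 0 < z J k \<bullet> v i"
  proof (rule ccontr)
    assume "\<not> ?thesis"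
    then have "\<forall>j\<in>J. z J j \<bullet> v i = 0" using lam by force
    then have s0: "(\<Sum>j\<in>J. (z J j \<bullet> v i) *\<^sub>R v j) = 0" by simp
    have "v i = (\<Sum>j\<in>J. (z J j \<bullet> v i) *\<^sub>R v j)" by (rule chamber_expand[OF J])
    then have "v i = 0" using s0 by (rule trans)
    then show False using v_nz by simp
  qed
  then obtain k where k: "k \<in> J" "0 < z J k \<bullet> v i" by blast
  define l where "l = z J k \<bullet> v i"
  have lp: "l > 0" using k(2) by (simp add: l_def)
  define a where "a = (2 * l) *\<^sub>R v k"
  define b where "b = 2 *\<^sub>R v i - a"
  have aC: "a \<in> cone J" unfolding a_def using k by (simp add: cone_def convex_cone_hull_mul hull_inc l_def)
  have bC: "b \<in> cone J"
  proof -
    have "0 \<le> z J j \<bullet> b" if "j \<in> J" for j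
      using lam[OF that] chamber_z[OF J that k(1)] by (auto simp: b_def a_def l_def inner_diff_right)
    then show ?thesis using chamber_cone[OF J] by auto
  qed
  have mid: "v i = midpoint a b" by (simp add: midpoint_def b_def scaleR_diff_right)
  show ?thesis
  proof (cases "a = b")
    case True
    then have "v i = a" using mid by (simp add: midpoint_idem)
    then have "v i = (2 * l) *\<^sub>R v k" by (simp add: a_def)
    then have "i = k" using ray_scale[of "2*l" i k] lp by simp
    then show ?thesis using k by simp
  next
    case False
    then have "v i \<in> open_segment a b" using mid by simp
    then have "a \<in> ray i" using face_ofD[OF face _ aC bC] vi by (auto simp: ray_def hull_inc)
    then obtain t where t: "a = t *\<^sub>R v i" "0 \<le> t" by (auto simp: ray_expl)
    have "a \<noteq> 0" using lp v_nz by (simp add: a_def)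
    then have "t > 0" using t by auto
    have "v k = (1 / (2 * l)) *\<^sub>R ((2 * l) *\<^sub>R v k)" using lp by simp
    also have "\<dots> = (1 / (2 * l)) *\<^sub>R (t *\<^sub>R v i)" using t(1) by (simp add: a_def)
    also have "\<dots> = (t / (2 * l)) *\<^sub>R v i" by simp
    finally have "v k = (t / (2 * l)) *\<^sub>R v i" .
    then have "k = i" using ray_scale[of "t / (2*l)" k i] \<open>t > 0\<close> lp by simp
    then show ?thesis using k by simp
  qed
qed

lemma every_i_chamber: "\<exists>J. chamber J \<and> i \<in> J"
  using cover[of "v i"] v_in_cone_imp by blast

end


context fan_setting begin

abbreviation "D \<equiv> deformation_polytopes F"

lemma D_poly: "P \<in> D \<Longrightarrow> is_polytope P" and D_coarse: "P \<in> D \<Longrightarrow> coarsens (normal_fan P) F"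
  by (auto simp: deformation_polytopes_def)

lemma poly_compact: "is_polytope P \<Longrightarrow> compact P" and poly_ne: "is_polytope P \<Longrightarrow> P \<noteq> {}"
  and poly_convex: "is_polytope P \<Longrightarrow> convex P"
  by (auto simp: is_polytope_def polytope_imp_compact polytope_imp_convex)

lemma chamber_u0: assumes J: "chamber J" and that: "k \<in> J" shows "z J k \<bullet> (\<Sum>j\<in>J. v j) = 1"
proof -
  have "z J k \<bullet> (\<Sum>j\<in>J. v j) = (\<Sum>j\<in>J. if j = k then 1 else 0)"
    unfolding inner_sum_right by (rule sum.cong) (auto simp: chamber_z[OF J that])
  also have "\<dots> = 1" using that by simp
  finally show ?thesis .
qed

lemma chamber_interior: assumes J: "chamber J" shows "(\<Sum>j\<in>J. v j) \<in> rel_interior (cone J)"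
proof -
  let ?O = "\<Inter>j\<in>J. {u. 0 < z J j \<bullet> u}"
  have finJ: "finite J" by simp
  have "open ?O" by (intro open_INT finJ ballI open_halfspace_gt)
  moreover have "?O \<subseteq> cone J" using chamber_cone[OF J] by (auto intro: less_imp_le)
  ultimately have "?O \<subseteq> interior (cone J)" by (rule interior_maximal[rotated])
  moreover have "(\<Sum>j\<in>J. v j) \<in> ?O" using chamber_u0[OF J] by auto
  ultimately show ?thesis using interior_subset_rel_interior by blast
qed

lemma chamber_flat:
  assumes P: "P \<in> D" and J: "chamber J"
  shows "\<exists>x\<in>P. \<forall>w\<in>cone J. x \<bullet> w = support_fun P w"
proof -
  define u0 where "u0 = (\<Sum>j\<in>J. v j)"
  have ri: "u0 \<in> rel_interior (cone J)" using chamber_interior[OF J] by (simp add: u0_def)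
  have cp: "compact P" "P \<noteq> {}" "convex P" using D_poly[OF P] poly_compact poly_ne poly_convex by auto
  obtain y where y: "y \<in> P" "y \<bullet> u0 = support_fun P u0" and le: "\<forall>x\<in>P. x \<bullet> u0 \<le> support_fun P u0"
    using sf_max[OF cp(1,2)] by blast
  let ?G = "P \<inter> {x. u0 \<bullet> x = support_fun P u0}"
  have Gf: "?G face_of P"
    by (rule face_of_Int_supporting_hyperplane_le) (use cp le in \<open>auto simp: inner_commute\<close>)
  have Gne: "?G \<noteq> {}" using y by (auto simp: inner_commute)
  have u0N: "u0 \<in> normal_cone P ?G" by (auto simp: normal_cone_def inner_commute)
  have "normal_cone P ?G \<in> normal_fan P" using Gf Gne by (auto simp: normal_fan_def)
  then obtain S where S: "S \<subseteq> F" "normal_cone P ?G = \<Union>S"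
    using D_coarse[OF P] by (auto simp: coarsens_def)
  then obtain C' where C': "C' \<in> S" "u0 \<in> C'" using u0N by auto
  have "(cone J \<inter> C') face_of cone J" using F_Int_face[OF chamber_cone_F[OF J]] C' S by auto
  then have "cone J \<subseteq> cone J \<inter> C'"
    by (rule subset_of_face_of) (use ri C' rel_interior_subset[of "cone J"] in blast)+
  then have sub: "cone J \<subseteq> normal_cone P ?G" using S C' by auto
  obtain x where x: "x \<in> ?G" using Gne by blast
  show ?thesis
  proof (intro bexI[of _ x] ballI)
    fix w assume "w \<in> cone J"
    then show "x \<bullet> w = support_fun P w" using sub x by (auto simp: normal_cone_def)
  qed (use x in auto)
qed

lemma sf_chamber:
  assumes P: "P \<in> D" and J: "chamber J" and u: "u \<in> cone J"
  shows "support_fun P u = (\<Sum>j\<in>J. (z J j \<bullet> u) * support_fun P (v j))"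
proof -
  obtain x where x: "x \<in> P" "\<forall>w\<in>cone J. x \<bullet> w = support_fun P w" using chamber_flat[OF P J] by blast
  have "support_fun P u = x \<bullet> u" using x u by simp
  also have "\<dots> = (\<Sum>j\<in>J. (z J j \<bullet> u) * (x \<bullet> v j))" by (rule chamber_inner[OF J])
  also have "\<dots> = (\<Sum>j\<in>J. (z J j \<bullet> u) * support_fun P (v j))"
    by (rule sum.cong) (use x v_in_cone in auto)
  finally show ?thesis .
qed

definition xJ :: "'n set \<Rightarrow> real^'n \<Rightarrow> 'a" where
  "xJ J h = (\<Sum>j\<in>J. (h $ j) *\<^sub>R z J j)"

definition Kv :: "(real^'n) set" where
  "Kv = {h. \<forall>J. chamber J \<longrightarrow> (\<forall>i. xJ J h \<bullet> v i \<le> h $ i)}"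

definition svv :: "'a set \<Rightarrow> real^'n" where
  "svv P = (\<chi> i. support_fun P (v i))"

definition Ph :: "real^'n \<Rightarrow> 'a set" where
  "Ph h = {x. \<forall>i. x \<bullet> v i \<le> h $ i}"

lemma xJ_inner: "chamber J \<Longrightarrow> k \<in> J \<Longrightarrow> xJ J h \<bullet> v k = h $ k"
proof -
  assume J: "chamber J" and k: "k \<in> J"
  have "xJ J h \<bullet> v k = (\<Sum>j\<in>J. if j = k then h $ k else 0)"
    unfolding xJ_def inner_sum_left by (rule sum.cong) (auto simp: chamber_z[OF J _ k])
  also have "\<dots> = h $ k" using k by simp
  finally show ?thesis .
qed

lemma xJ_inner_u: "xJ J h \<bullet> u = (\<Sum>j\<in>J. (z J j \<bullet> u) * h $ j)"
  unfolding xJ_def inner_sum_left by (simp add: mult.commute)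

lemma svv_Kv: assumes P: "P \<in> D" shows "svv P \<in> Kv"
proof -
  have "xJ J (svv P) \<bullet> v i \<le> svv P $ i" if J: "chamber J" for J i
  proof -
    obtain x where x: "x \<in> P" "\<forall>w\<in>cone J. x \<bullet> w = support_fun P w" using chamber_flat[OF P J] by blast
    have "x = (\<Sum>j\<in>J. (x \<bullet> v j) *\<^sub>R z J j)" by (rule chamber_expand_dual[OF J])
    also have "\<dots> = xJ J (svv P)" unfolding xJ_def svv_def
      by (rule sum.cong) (use x v_in_cone in auto)
    finally have "x = xJ J (svv P)" .
    moreover have "x \<bullet> v i \<le> support_fun P (v i)"
      using sf_max[OF poly_compact[OF D_poly[OF P]] poly_ne[OF D_poly[OF P]]] x(1) by blast
    ultimately show ?thesis by (simp add: svv_def)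
  qed
  then show ?thesis by (simp add: Kv_def)
qed

lemma Ph_upper: assumes J: "chamber J" and u: "u \<in> cone J" and x: "x \<in> Ph h"
  shows "x \<bullet> u \<le> xJ J h \<bullet> u"
proof -
  have "x \<bullet> u = (\<Sum>j\<in>J. (z J j \<bullet> u) * (x \<bullet> v j))" by (rule chamber_inner[OF J])
  also have "\<dots> \<le> (\<Sum>j\<in>J. (z J j \<bullet> u) * h $ j)"
    using u x chamber_cone[OF J] by (intro sum_mono mult_left_mono) (auto simp: Ph_def)
  also have "\<dots> = xJ J h \<bullet> u" by (simp add: xJ_inner_u)
  finally show ?thesis .
qed

lemma xJ_Ph: "h \<in> Kv \<Longrightarrow> chamber J \<Longrightarrow> xJ J h \<in> Ph h"
  by (auto simp: Kv_def Ph_def)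

lemma sf_Ph: assumes h: "h \<in> Kv" and J: "chamber J" and u: "u \<in> cone J"
  shows "support_fun (Ph h) u = xJ J h \<bullet> u"
  by (rule sf_attained) (use xJ_Ph[OF h J] Ph_upper[OF J u] in auto)

lemma Ph_ne: "h \<in> Kv \<Longrightarrow> Ph h \<noteq> {}"
  using cover[of 0] xJ_Ph by blast

lemma Ph_bounded: assumes h: "h \<in> Kv" shows "bounded (Ph h)"
proof -
  define M where "M = (\<Sum>J\<in>{J. chamber J}. norm (xJ J h))"
  have "norm x \<le> M" if x: "x \<in> Ph h" for x
  proof -
    obtain J where J: "chamber J" "x \<in> cone J" using cover by blast
    have "x \<bullet> x \<le> xJ J h \<bullet> x" by (rule Ph_upper[OF J(1) J(2) x])
    also have "\<dots> \<le> norm (xJ J h) * norm x" by (rule order_trans[OF _ norm_cauchy_schwarz]) simp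
    also have "norm (xJ J h) \<le> M" unfolding M_def
      by (rule member_le_sum[of J "{J. chamber J}" "\<lambda>J. norm (xJ J h)"]) (use J in auto)
    then have "norm (xJ J h) * norm x \<le> M * norm x" by (simp add: mult_right_mono)
    finally have "norm x * norm x \<le> M * norm x" by (simp add: power2_norm_eq_inner[symmetric] power2_eq_square)
    then show ?thesis
      by (cases "norm x = 0") (auto simp: M_def intro: sum_nonneg)
  qed
  then show ?thesis by (auto simp: bounded_iff)
qed

lemma Ph_polyhedron: "polyhedron (Ph h)"
proof -
  have "Ph h = \<Inter>(range (\<lambda>i. {x. v i \<bullet> x \<le> h $ i}))" by (auto simp: Ph_def inner_commute)
  moreover have "polyhedron (\<Inter>(range (\<lambda>i. {x. v i \<bullet> x \<le> h $ i})))"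
    by (intro polyhedron_Inter) (auto simp: polyhedron_halfspace_le)
  ultimately show ?thesis by simp
qed

lemma Ph_polytope: "h \<in> Kv \<Longrightarrow> is_polytope (Ph h)"
  using Ph_ne Ph_bounded Ph_polyhedron by (simp add: is_polytope_def polytope_eq_bounded_polyhedron)

lemma svv_Ph: assumes h: "h \<in> Kv" shows "svv (Ph h) = h"
proof -
  have "support_fun (Ph h) (v i) = h $ i" for i
  proof -
    obtain J where J: "chamber J" "i \<in> J" using every_i_chamber by blast
    have "support_fun (Ph h) (v i) = xJ J h \<bullet> v i" by (rule sf_Ph[OF h J(1) v_in_cone[OF J(2)]])
    also have "\<dots> = h $ i" by (rule xJ_inner[OF J])
    finally show ?thesis .
  qed
  then show ?thesis by (simp add: svv_def vec_eq_iff)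
qed

lemma Ph_coarse: assumes h: "h \<in> Kv" shows "coarsens (normal_fan (Ph h)) F"
  unfolding coarsens_def
proof
  fix N assume "N \<in> normal_fan (Ph h)"
  then obtain G where G: "G face_of Ph h" "G \<noteq> {}" "N = normal_cone (Ph h) G" by (auto simp: normal_fan_def)
  have "N \<subseteq> \<Union>{C\<in>F. C \<subseteq> N}"
  proof
    fix u assume uN: "u \<in> N"
    obtain J where J: "chamber J" "u \<in> cone J" using cover by blast
    define J' where "J' = {j\<in>J. 0 < z J j \<bullet> u}"
    define \<zeta> where "\<zeta> = (\<Sum>j\<in>J - J'. z J j)"
    define C' where "C' = cone J \<inter> {w. (- \<zeta>) \<bullet> w = 0}"
    have zc: "0 \<le> z J j \<bullet> w" if "w \<in> cone J" "j \<in> J" for w j using that chamber_cone[OF J(1)] by auto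
    have C'face: "C' face_of cone J" unfolding C'_def
      by (rule face_of_Int_supporting_hyperplane_le)
        (auto simp: convex_cone_J \<zeta>_def inner_sum_left intro!: sum_nonneg zc)
    have "0 \<in> C'" by (simp add: C'_def cone_def convex_cone_hull_contains_0)
    then have C'F: "C' \<in> F" using face_in_F[OF chamber_cone_F[OF J(1)] C'face] by auto
    have zero_out: "z J j \<bullet> w = 0" if "w \<in> C'" "j \<in> J - J'" for w j
    proof -
      have wc: "w \<in> cone J" and "(\<Sum>j\<in>J - J'. z J j \<bullet> w) = 0"
        using that(1) by (auto simp: C'_def \<zeta>_def inner_sum_left)
      then show ?thesis using that(2) zc[OF wc] by (subst (asm) sum_nonneg_eq_0_iff) auto
    qed
    have uC': "u \<in> C'"
    proof -
      have "(\<Sum>j\<in>J - J'. z J j \<bullet> u) = 0" using zc[OF J(2)] by (intro sum.neutral) (force simp: J'_def)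
      then show ?thesis using J(2) by (simp add: C'_def \<zeta>_def inner_sum_left)
    qed
    have "C' \<subseteq> N"
    proof
      fix w assume wC': "w \<in> C'"
      then have wJ: "w \<in> cone J" by (simp add: C'_def)
      have "x \<bullet> w = support_fun (Ph h) w" if xG: "x \<in> G" for x
      proof -
        have xP: "x \<in> Ph h" using face_of_imp_subset[OF G(1)] xG by auto
        have xu: "x \<bullet> u = xJ J h \<bullet> u"
          using uN xG G(3) sf_Ph[OF h J] by (auto simp: normal_cone_def)
        have nn: "0 \<le> (z J j \<bullet> u) * (h $ j - x \<bullet> v j)" if "j \<in> J" for j
          using zc[OF J(2) that] xP by (auto simp: Ph_def)
        have "(\<Sum>j\<in>J. (z J j \<bullet> u) * (h $ j - x \<bullet> v j)) = xJ J h \<bullet> u - x \<bullet> u"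
          by (simp add: xJ_inner_u chamber_inner[OF J(1), of x u] right_diff_distrib sum_subtractf)
        then have "(\<Sum>j\<in>J. (z J j \<bullet> u) * (h $ j - x \<bullet> v j)) = 0" using xu by simp
        then have each: "\<forall>j\<in>J. (z J j \<bullet> u) * (h $ j - x \<bullet> v j) = 0"
          using nn by (subst (asm) sum_nonneg_eq_0_iff) auto
        have "(\<Sum>j\<in>J. (z J j \<bullet> w) * (h $ j - x \<bullet> v j)) = 0"
        proof (rule sum.neutral, rule ballI)
          fix j assume j: "j \<in> J"
          show "(z J j \<bullet> w) * (h $ j - x \<bullet> v j) = 0"
          proof (cases "j \<in> J'")
            case True
            then have "0 < z J j \<bullet> u" by (simp add: J'_def)
            then show ?thesis using each j by auto
          next
            case False
            then show ?thesis using zero_out[OF wC'] j by auto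
          qed
        qed
        moreover have "(\<Sum>j\<in>J. (z J j \<bullet> w) * (h $ j - x \<bullet> v j)) = xJ J h \<bullet> w - x \<bullet> w"
          by (simp add: xJ_inner_u chamber_inner[OF J(1), of x w] right_diff_distrib sum_subtractf)
        ultimately have "x \<bullet> w = xJ J h \<bullet> w" by simp
        then show ?thesis using sf_Ph[OF h J(1) wJ] by simp
      qed
      then show "w \<in> N" using G(3) by (simp add: normal_cone_def)
    qed
    then show "u \<in> \<Union>{C\<in>F. C \<subseteq> N}" using C'F uC' by blast
  qed
  then have "N = \<Union>{C\<in>F. C \<subseteq> N}" by blast
  then show "\<exists>S\<subseteq>F. N = \<Union>S" by (intro exI[of _ "{C\<in>F. C \<subseteq> N}"]) auto
qed

lemma Ph_D: "h \<in> Kv \<Longrightarrow> Ph h \<in> D"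
  using Ph_polytope Ph_coarse by (simp add: deformation_polytopes_def)

lemma Kv_eq: "Kv = svv ` D"
  using svv_Kv Ph_D svv_Ph by (auto simp: image_iff) (metis)

end


lemma span_cone_diff:
  fixes K :: "'b::real_vector set"
  assumes K0: "0 \<in> K" and Kadd: "\<And>p q. p \<in> K \<Longrightarrow> q \<in> K \<Longrightarrow> p + q \<in> K"
    and Ksc: "\<And>p c. p \<in> K \<Longrightarrow> 0 \<le> c \<Longrightarrow> c *\<^sub>R p \<in> K"
    and w: "w \<in> span K"
  shows "\<exists>p q. p \<in> K \<and> q \<in> K \<and> w = p - q"
proof -
  let ?S = "{p - q | p q. p \<in> K \<and> q \<in> K}"
  have "subspace ?S"
    unfolding subspace_def
  proof (intro conjI allI impI ballI)
    show "0 \<in> ?S" using K0 by (intro CollectI exI[of _ 0]) auto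
  next
    fix x y assume "x \<in> ?S" "y \<in> ?S"
    then obtain p q p' q' where "x = p - q" "y = p' - q'" "p \<in> K" "q \<in> K" "p' \<in> K" "q' \<in> K" by blast
    then show "x + y \<in> ?S" using Kadd by (intro CollectI exI[of _ "p + p'"] exI[of _ "q + q'"]) auto
  next
    fix c :: real and x assume "x \<in> ?S"
    then obtain p q where pq: "x = p - q" "p \<in> K" "q \<in> K" by blast
    show "c *\<^sub>R x \<in> ?S"
    proof (cases "0 \<le> c")
      case True then show ?thesis using pq Ksc
        by (intro CollectI exI[of _ "c *\<^sub>R p"] exI[of _ "c *\<^sub>R q"]) (auto simp: scaleR_diff_right)
    next
      case False then show ?thesis using pq Ksc[of _ "- c"]
        by (intro CollectI exI[of _ "(- c) *\<^sub>R q"] exI[of _ "(- c) *\<^sub>R p"]) (auto simp: scaleR_diff_right)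
    qed
  qed
  moreover have "K \<subseteq> ?S" using K0 by force
  ultimately have "span K \<subseteq> ?S" by (rule span_minimal[rotated])
  then show ?thesis using w by blast
qed

locale opt_setting =
  fixes K :: "'b::euclidean_space set" and a :: "nat \<Rightarrow> 'b \<Rightarrow> real" and m :: nat
  assumes K0: "0 \<in> K" and Kadd: "\<And>p q. p \<in> K \<Longrightarrow> q \<in> K \<Longrightarrow> p + q \<in> K"
    and Ksc: "\<And>p c. p \<in> K \<Longrightarrow> 0 \<le> c \<Longrightarrow> c *\<^sub>R p \<in> K"
    and Kclosed: "closed K"
    and lin: "\<And>k. linear (a k)"
begin

definition g :: "'b \<Rightarrow> real" where "g w = (\<Sum>k<m. (a k w)\<^sup>2)"

lemma cont_a: "continuous_on S (a k)"
  using lin[of k] by (simp add: linear_conv_bounded_linear linear_continuous_on)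

lemma cont_g: "continuous_on S g"
  unfolding g_def by (intro continuous_intros cont_a)

lemma a_diff: "a k (x - y) = a k x - a k y" using lin[of k] by (simp add: linear_diff)
lemma a_add: "a k (x + y) = a k x + a k y" using lin[of k] by (simp add: linear_add)
lemma a_scale: "a k (c *\<^sub>R x) = c * a k x" using lin[of k] by (simp add: linear_scale)
lemma a_zero: "a k 0 = 0" using lin[of k] by (simp add: linear_0)

lemma g_scale: "g (c *\<^sub>R w) = c\<^sup>2 * g w"
  by (simp add: g_def a_scale power_mult_distrib sum_distrib_left)

lemma quant_bound:
  assumes inj: "\<forall>h1\<in>K. \<forall>h2\<in>K. (\<forall>k<m. a k h1 = a k h2) \<longrightarrow> h1 = h2"
  shows "\<exists>c>0. \<forall>w\<in>span K. c * (norm w)\<^sup>2 \<le> g w"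
proof -
  let ?T = "span K \<inter> sphere 0 1"
  have cT: "compact ?T" by (intro closed_Int_compact closed_subspace subspace_span compact_sphere)
  have nz: "0 < g w" if w: "w \<in> span K" "w \<noteq> 0" for w
  proof (rule ccontr)
    assume "\<not> 0 < g w"
    moreover have "0 \<le> g w" by (simp add: g_def sum_nonneg)
    ultimately have "g w = 0" by simp
    then have "\<forall>k\<in>{..<m}. (a k w)\<^sup>2 = 0" unfolding g_def by (subst (asm) sum_nonneg_eq_0_iff) auto
    then have ak: "\<forall>k<m. a k w = 0" by simp
    obtain p q where pq: "p \<in> K" "q \<in> K" "w = p - q" using span_cone_diff[OF K0 Kadd Ksc w(1)] by blast
    have "\<forall>k<m. a k p = a k q" using ak pq(3) by (simp add: a_diff)
    then have "p = q" using inj pq by blast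
    then show False using pq w(2) by simp
  qed
  show ?thesis
  proof (cases "?T = {}")
    case True
    have "w = 0" if "w \<in> span K" for w
    proof (rule ccontr)
      assume "w \<noteq> 0"
      then have "(1 / norm w) *\<^sub>R w \<in> ?T" using that by (simp add: span_mul)
      then show False using True by blast
    qed
    show ?thesis
    proof (intro exI[of _ 1] conjI ballI)
      fix w assume "w \<in> span K"
      then have "w = 0" using \<open>\<And>w. w \<in> span K \<Longrightarrow> w = 0\<close> by blast
      then show "1 * (norm w)\<^sup>2 \<le> g w" by (simp add: g_def a_zero)
    qed simp
  next
    case False
    obtain w0 where w0: "w0 \<in> ?T" "\<forall>y\<in>?T. g w0 \<le> g y"
      using continuous_attains_inf[OF cT False cont_g] by blast
    have gp: "0 < g w0" using w0(1) by (intro nz) auto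
    show ?thesis
    proof (intro exI[of _ "g w0"] conjI gp ballI)
      fix w assume w: "w \<in> span K"
      show "g w0 * (norm w)\<^sup>2 \<le> g w"
      proof (cases "w = 0")
        case True then show ?thesis by (simp add: g_def a_zero)
      next
        case False
        let ?w' = "(1 / norm w) *\<^sub>R w"
        have "?w' \<in> ?T" using w False by (simp add: span_mul)
        then have "g w0 \<le> g ?w'" using w0 by blast
        also have "g ?w' = g w / (norm w)\<^sup>2" by (simp add: g_scale power_divide)
        finally show ?thesis using False by (simp add: field_simps)
      qed
    qed
  qed
qed

definition Q :: "(nat \<Rightarrow> real) \<Rightarrow> 'b \<Rightarrow> real" where "Q y h = (\<Sum>k<m. (a k h - y k)\<^sup>2)"

lemma cont_Q: "continuous_on S (Q y)"
  unfolding Q_def by (intro continuous_intros cont_a)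

lemma opt_unique:
  assumes inj: "\<forall>h1\<in>K. \<forall>h2\<in>K. (\<forall>k<m. a k h1 = a k h2) \<longrightarrow> h1 = h2"
  shows "\<exists>!h. h \<in> K \<and> (\<forall>h'\<in>K. Q y h \<le> Q y h')"
proof -
  obtain c where c: "c > 0" "\<forall>w\<in>span K. c * (norm w)\<^sup>2 \<le> g w" using quant_bound[OF inj] by blast
  define R where "R = 2 * Q y 0 + 2 * (\<Sum>k<m. (y k)\<^sup>2)"
  let ?S = "K \<inter> {h. Q y h \<le> Q y 0}"
  have bnd: "norm h \<le> max 1 (R / c)" if h: "h \<in> ?S" for h
  proof -
    have "g h \<le> 2 * Q y h + 2 * (\<Sum>k<m. (y k)\<^sup>2)"
    proof -
      have "(a k h)\<^sup>2 \<le> 2 * (a k h - y k)\<^sup>2 + 2 * (y k)\<^sup>2" for k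
      proof -
        have "2 * (a k h - y k)\<^sup>2 + 2 * (y k)\<^sup>2 - (a k h)\<^sup>2 = (a k h - 2 * y k)\<^sup>2"
          by (simp add: power2_eq_square algebra_simps)
        then show ?thesis using zero_le_power2[of "a k h - 2 * y k"] by linarith
      qed
      then have "g h \<le> (\<Sum>k<m. 2 * (a k h - y k)\<^sup>2 + 2 * (y k)\<^sup>2)" unfolding g_def by (intro sum_mono) auto
      also have "\<dots> = 2 * Q y h + 2 * (\<Sum>k<m. (y k)\<^sup>2)" by (simp add: Q_def sum.distrib sum_distrib_left)
      finally show ?thesis .
    qed
    also have "\<dots> \<le> R" using h by (simp add: R_def)
    finally have gR: "g h \<le> R" .
    have "c * (norm h)\<^sup>2 \<le> g h" using c h by (simp add: span_base)
    then have n2: "(norm h)\<^sup>2 \<le> R / c" using gR c by (simp add: field_simps)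
    show ?thesis
    proof (cases "norm h \<le> 1")
      case False
      then have "1 \<le> norm h" by simp
      then have "norm h * 1 \<le> norm h * norm h" by (intro mult_left_mono) simp_all
      then have "norm h \<le> (norm h)\<^sup>2" by (simp add: power2_eq_square)
      then show ?thesis using n2 by linarith
    qed simp
  qed
  have cS: "compact ?S"
    unfolding compact_eq_bounded_closed
  proof
    show "bounded ?S" using bnd unfolding bounded_iff by blast
    show "closed ?S" using Kclosed by (intro closed_Int closed_Collect_le cont_Q continuous_on_const)
  qed
  have neS: "?S \<noteq> {}" using K0 by auto
  have exh: "\<exists>x\<in>?S. \<forall>z\<in>?S. Q y x \<le> Q y z" by (rule continuous_attains_inf[OF cS neS cont_Q])
  then obtain hs where hs: "hs \<in> ?S" "\<forall>h\<in>?S. Q y hs \<le> Q y h" by (elim bexE) (rule that)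
  have minK: "\<forall>h'\<in>K. Q y hs \<le> Q y h'"
  proof
    fix h' assume "h' \<in> K"
    show "Q y hs \<le> Q y h'"
    proof (cases "Q y h' \<le> Q y 0")
      case True then show ?thesis using hs \<open>h' \<in> K\<close> by auto
    next
      case False then show ?thesis using hs by auto
    qed
  qed
  show ?thesis
  proof (rule ex_ex1I)
    show "\<exists>h. h \<in> K \<and> (\<forall>h'\<in>K. Q y h \<le> Q y h')" using hs minK by blast
  next
    fix h1 h2 assume h1: "h1 \<in> K \<and> (\<forall>h'\<in>K. Q y h1 \<le> Q y h')" and h2: "h2 \<in> K \<and> (\<forall>h'\<in>K. Q y h2 \<le> Q y h')"
    define mid where "mid = (1/2) *\<^sub>R h1 + (1/2) *\<^sub>R h2"
    have midK: "mid \<in> K" using h1 h2 by (simp add: mid_def Kadd Ksc)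
    have eq: "Q y h1 = Q y h2" using h1 h2 by force
    have "(a k mid - y k)\<^sup>2 = ((a k h1 - y k)\<^sup>2 + (a k h2 - y k)\<^sup>2) / 2 - (a k h1 - a k h2)\<^sup>2 / 4" for k
      by (simp add: mid_def a_add a_scale power2_eq_square field_simps)
    then have "Q y mid = (Q y h1 + Q y h2) / 2 - (\<Sum>k<m. (a k h1 - a k h2)\<^sup>2) / 4"
      by (simp add: Q_def sum_subtractf sum_divide_distrib[symmetric] sum.distrib)
    moreover have "Q y h1 \<le> Q y mid" using h1 midK by blast
    ultimately have "(\<Sum>k<m. (a k h1 - a k h2)\<^sup>2) \<le> 0" using eq by simp
    moreover have "0 \<le> (\<Sum>k<m. (a k h1 - a k h2)\<^sup>2)" by (intro sum_nonneg) simp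
    ultimately have "(\<Sum>k<m. (a k h1 - a k h2)\<^sup>2) = 0" by linarith
    then have "\<forall>k\<in>{..<m}. (a k h1 - a k h2)\<^sup>2 = 0"
      by (subst (asm) sum_nonneg_eq_0_iff) auto
    then have "\<forall>k<m. a k h1 = a k h2" by simp
    then show "h1 = h2" using inj h1 h2 by blast
  qed
qed

end


context fan_setting begin

definition Jof :: "'a \<Rightarrow> 'n set" where "Jof u = (SOME J. chamber J \<and> u \<in> cone J)"

lemma Jof: "chamber (Jof u) \<and> u \<in> cone (Jof u)"
  unfolding Jof_def by (rule someI_ex[OF cover])

definition afun :: "'a \<Rightarrow> real^'n \<Rightarrow> real" where
  "afun u h = (\<Sum>j\<in>Jof u. (z (Jof u) j \<bullet> u) * h $ j)"

lemma sf_afun: "P \<in> D \<Longrightarrow> support_fun P u = afun u (svv P)"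
  using sf_chamber[of P "Jof u" u] Jof[of u] by (simp add: afun_def svv_def)

lemma sf_svv: "P \<in> D \<Longrightarrow> chamber J \<Longrightarrow> u \<in> cone J \<Longrightarrow>
    support_fun P u = (\<Sum>j\<in>J. (z J j \<bullet> u) * svv P $ j)"
  using sf_chamber[of P J u] by (simp add: svv_def)

lemma afun_linear: "linear (afun u)"
  by (rule linearI) (simp_all add: afun_def sum.distrib distrib_left sum_distrib_left mult.left_commute)

lemma xJ_add: "xJ J (p + q) = xJ J p + xJ J q"
  by (simp add: xJ_def scaleR_add_left sum.distrib)
lemma xJ_scale: "xJ J (c *\<^sub>R p) = c *\<^sub>R xJ J p"
  by (simp add: xJ_def scaleR_sum_right)
lemma xJ_zero: "xJ J 0 = 0"
  by (simp add: xJ_def)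

lemma Kv_0: "0 \<in> Kv" by (simp add: Kv_def xJ_zero)

lemma Kv_add: "p \<in> Kv \<Longrightarrow> q \<in> Kv \<Longrightarrow> p + q \<in> Kv"
  unfolding Kv_def by (auto simp: xJ_add inner_add_left intro: add_mono)

lemma Kv_scale: "p \<in> Kv \<Longrightarrow> 0 \<le> c \<Longrightarrow> c *\<^sub>R p \<in> Kv"
  unfolding Kv_def by (auto simp: xJ_scale intro: mult_left_mono)

lemma Kv_closed: "closed Kv"
proof -
  have c1: "continuous_on UNIV (\<lambda>h::real^'n. xJ J h \<bullet> v i)" for J i
  proof -
    have "linear (\<lambda>h::real^'n. xJ J h \<bullet> v i)"
      by (rule linearI) (simp_all add: xJ_add xJ_scale inner_add_left)
    then show ?thesis by (simp add: linear_conv_bounded_linear linear_continuous_on)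
  qed
  have c2: "continuous_on UNIV (\<lambda>h::real^'n. h $ i)" for i
    by (rule linear_continuous_on) (rule bounded_linear_vec_nth)
  have "closed {h::real^'n. chamber J \<longrightarrow> (\<forall>i. xJ J h \<bullet> v i \<le> h $ i)}" for J
  proof (cases "chamber J")
    case True
    then show ?thesis by simp (intro closed_Collect_all closed_Collect_le c1 c2)
  qed simp
  then show ?thesis unfolding Kv_def by (intro closed_Collect_all)
qed

definition inj_samples :: "(nat \<Rightarrow> 'a) \<Rightarrow> nat \<Rightarrow> bool" where
  "inj_samples U m \<longleftrightarrow> (\<forall>P\<in>D. \<forall>Q\<in>D. (\<forall>k<m. support_fun P (U k) = support_fun Q (U k))
      \<longrightarrow> support_vector v P = support_vector v Q)"

lemma sv_svv: "support_vector v P = (\<lambda>i. svv P $ i)"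
  by (simp add: support_vector_def svv_def)

lemma sv_eq_iff: "support_vector v P = support_vector v Q \<longleftrightarrow> svv P = svv Q"
  by (simp add: sv_svv vec_eq_iff fun_eq_iff)

lemma inj_Kv: "inj_samples U m \<longleftrightarrow>
   (\<forall>h1\<in>Kv. \<forall>h2\<in>Kv. (\<forall>k<m. afun (U k) h1 = afun (U k) h2) \<longrightarrow> h1 = h2)"
proof
  assume inj: "inj_samples U m"
  show "\<forall>h1\<in>Kv. \<forall>h2\<in>Kv. (\<forall>k<m. afun (U k) h1 = afun (U k) h2) \<longrightarrow> h1 = h2"
  proof (intro ballI impI)
    fix h1 h2 assume h: "h1 \<in> Kv" "h2 \<in> Kv" and eq: "\<forall>k<m. afun (U k) h1 = afun (U k) h2"
    have "\<forall>k<m. support_fun (Ph h1) (U k) = support_fun (Ph h2) (U k)"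
      using eq sf_afun[OF Ph_D[OF h(1)]] sf_afun[OF Ph_D[OF h(2)]] svv_Ph h by simp
    then have "svv (Ph h1) = svv (Ph h2)" using inj Ph_D h by (auto simp: inj_samples_def sv_eq_iff)
    then show "h1 = h2" using svv_Ph h by simp
  qed
next
  assume inj: "\<forall>h1\<in>Kv. \<forall>h2\<in>Kv. (\<forall>k<m. afun (U k) h1 = afun (U k) h2) \<longrightarrow> h1 = h2"
  show "inj_samples U m" unfolding inj_samples_def sv_eq_iff
  proof (intro ballI impI)
    fix P Q assume PQ: "P \<in> D" "Q \<in> D" and eq: "\<forall>k<m. support_fun P (U k) = support_fun Q (U k)"
    then show "svv P = svv Q" using inj svv_Kv sf_afun by metis
  qed
qed

lemma loss_Q: "P \<in> D \<Longrightarrow> ls_loss U m y P = (1 / real m) * opt_setting.Q (\<lambda>k. afun (U k)) m y (svv P)"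
proof -
  have O: "opt_setting Kv (\<lambda>k. afun (U k))"
    by (rule opt_setting.intro[OF Kv_0 Kv_add Kv_scale Kv_closed afun_linear])
  assume "P \<in> D"
  then show ?thesis unfolding ls_loss_def by (simp add: opt_setting.Q_def[OF O] sf_afun)
qed

lemma lse_card:
  assumes m: "0 < m" and inj: "inj_samples U m"
  shows "card (lse F v U m y) = 1"
proof -
  interpret O: opt_setting Kv "\<lambda>k. afun (U k)" m
    by (rule opt_setting.intro[OF Kv_0 Kv_add Kv_scale Kv_closed afun_linear])
  have injK: "\<forall>h1\<in>Kv. \<forall>h2\<in>Kv. (\<forall>k<m. afun (U k) h1 = afun (U k) h2) \<longrightarrow> h1 = h2"
    using inj inj_Kv by blast
  obtain hs where hs: "hs \<in> Kv" "\<forall>h'\<in>Kv. O.Q y hs \<le> O.Q y h'"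
    and uniq: "\<And>h. h \<in> Kv \<Longrightarrow> (\<forall>h'\<in>Kv. O.Q y h \<le> O.Q y h') \<Longrightarrow> h = hs"
    using O.opt_unique[OF injK, of y] by blast
  have mp: "0 < 1 / real m" using m by simp
  have minD: "(\<forall>Q\<in>D. ls_loss U m y P \<le> ls_loss U m y Q) \<longleftrightarrow> (\<forall>h'\<in>Kv. O.Q y (svv P) \<le> O.Q y h')"
    if P: "P \<in> D" for P
  proof -
    have "ls_loss U m y P \<le> ls_loss U m y Q \<longleftrightarrow> O.Q y (svv P) \<le> O.Q y (svv Q)" if Q: "Q \<in> D" for Q
      using loss_Q[OF P, of U m y] loss_Q[OF Q, of U m y] m by (simp add: divide_le_cancel)
    then have "(\<forall>Q\<in>D. ls_loss U m y P \<le> ls_loss U m y Q) \<longleftrightarrow> (\<forall>Q\<in>D. O.Q y (svv P) \<le> O.Q y (svv Q))"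
      by blast
    also have "\<dots> \<longleftrightarrow> (\<forall>h'\<in>Kv. O.Q y (svv P) \<le> O.Q y h')" using Kv_eq by auto
    finally show ?thesis .
  qed
  have "lse F v U m y = {(\<lambda>i. hs $ i)}"
  proof safe
    fix f assume "f \<in> lse F v U m y"
    then obtain P where P: "f = support_vector v P" "P \<in> D" "\<forall>Q\<in>D. ls_loss U m y P \<le> ls_loss U m y Q"
      by (auto simp: lse_def)
    then have "svv P = hs" using minD[OF P(2)] uniq svv_Kv by blast
    then show "f = (\<lambda>i. hs $ i)" using P(1) by (simp add: sv_svv)
  next
    have PD: "Ph hs \<in> D" using Ph_D[OF hs(1)] .
    have "\<forall>Q\<in>D. ls_loss U m y (Ph hs) \<le> ls_loss U m y Q"
      using minD[OF PD] svv_Ph[OF hs(1)] hs(2) by simp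
    then show "(\<lambda>i. hs $ i) \<in> lse F v U m y"
      using PD svv_Ph[OF hs(1)] unfolding lse_def by (auto simp: sv_svv intro!: exI[of _ "Ph hs"])
  qed
  then show ?thesis by simp
qed

lemma lse_not_inj:
  assumes "\<not> inj_samples U m"
  shows "\<exists>y. card (lse F v U m y) \<noteq> 1"
proof -
  obtain P Q where PQ: "P \<in> D" "Q \<in> D" "\<forall>k<m. support_fun P (U k) = support_fun Q (U k)"
    "support_vector v P \<noteq> support_vector v Q"
    using assms by (auto simp: inj_samples_def)
  define y where "y = (\<lambda>k. support_fun P (U k))"
  have l0P: "ls_loss U m y P = 0" by (simp add: ls_loss_def y_def)
  have l0Q: "ls_loss U m y Q = 0" using PQ(3) by (simp add: ls_loss_def y_def)
  have nn: "0 \<le> ls_loss U m y R" for R by (simp add: ls_loss_def sum_nonneg)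
  have "support_vector v P \<in> lse F v U m y" unfolding lse_def using PQ(1) l0P nn by auto
  moreover have "support_vector v Q \<in> lse F v U m y" unfolding lse_def using PQ(2) l0Q nn by auto
  ultimately have "card (lse F v U m y) \<noteq> 1" using PQ(4) by (auto simp: card_Suc_eq)
  then show ?thesis by blast
qed

lemma all_y_iff: "0 < m \<Longrightarrow> (\<forall>y. card (lse F v U m y) = 1) \<longleftrightarrow> inj_samples U m"
  using lse_card lse_not_inj by blast

end


lemma sets_us: "sets uniform_sphere = sets borel" by (simp add: uniform_sphere_def)
lemma space_us: "space uniform_sphere = UNIV" by (simp add: uniform_sphere_def)

lemma sf_lipschitz:
  fixes P :: "'a::euclidean_space set"
  assumes "compact P" "P \<noteq> {}"
  shows "\<exists>R\<ge>0. \<forall>u u'. support_fun P u - support_fun P u' \<le> R * norm (u - u')"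
proof -
  obtain R where R: "\<forall>x\<in>P. norm x \<le> R" using compact_imp_bounded[OF assms(1)] by (auto simp: bounded_iff)
  have R0: "0 \<le> R" using R assms(2) by (meson all_not_in_conv norm_ge_zero order_trans)
  have "support_fun P u - support_fun P u' \<le> R * norm (u - u')" for u u'
  proof -
    obtain x where x: "x \<in> P" "x \<bullet> u = support_fun P u" using sf_max[OF assms] by blast
    have "x \<bullet> u' \<le> support_fun P u'" using sf_max[OF assms] x(1) by blast
    moreover have "x \<bullet> (u - u') \<le> norm x * norm (u - u')" by (rule order_trans[OF _ norm_cauchy_schwarz]) simp
    moreover have "norm x * norm (u - u') \<le> R * norm (u - u')" using R x(1) by (simp add: mult_right_mono)
    ultimately show ?thesis using x(2) by (simp add: inner_diff_right)
  qed
  then show ?thesis using R0 by blast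
qed

lemma sf_cont:
  fixes P :: "'a::euclidean_space set"
  assumes "compact P" "P \<noteq> {}"
  shows "continuous_on UNIV (support_fun P)"
proof -
  obtain R where R: "R \<ge> 0" "\<forall>u u'. support_fun P u - support_fun P u' \<le> R * norm (u - u')"
    using sf_lipschitz[OF assms] by blast
  have "R-lipschitz_on UNIV (support_fun P)"
  proof (rule lipschitz_onI)
    fix x y :: 'a
    have "support_fun P x - support_fun P y \<le> R * norm (x - y)" using R by blast
    moreover have "support_fun P y - support_fun P x \<le> R * norm (x - y)" using R(2)[rule_format, of y x]
      by (simp add: norm_minus_commute)
    ultimately show "dist (support_fun P x) (support_fun P y) \<le> R * dist x y"
      by (simp add: dist_real_def dist_norm abs_le_iff)
  qed (use R in auto)
  then show ?thesis by (rule lipschitz_on_continuous_on)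
qed

lemma sf_meas:
  fixes P :: "'a::euclidean_space set"
  assumes "compact P" "P \<noteq> {}" "k < m"
  shows "(\<lambda>U. support_fun P (U k)) \<in> borel_measurable (PiM {..<m} (\<lambda>_. uniform_sphere))"
proof -
  have "(\<lambda>U. U k) \<in> measurable (PiM {..<m} (\<lambda>_. uniform_sphere)) uniform_sphere"
    using measurable_component_singleton[of k "{..<m}" "\<lambda>_. uniform_sphere"] assms(3) by simp
  moreover have "support_fun P \<in> measurable uniform_sphere borel"
    using borel_measurable_continuous_onI[OF sf_cont[OF assms(1,2)]]
    by (subst measurable_cong_sets[OF sets_us refl])
  ultimately show ?thesis by (rule measurable_compose)
qed

context fan_setting begin

lemma cont_afun: "continuous_on S (afun u)"
  using afun_linear[of u] by (simp add: linear_conv_bounded_linear linear_continuous_on)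

lemma afun_diff: "afun u (x - y) = afun u x - afun u y"
  using afun_linear[of u] by (simp add: linear_diff)

definition GG :: "(nat \<Rightarrow> 'a) \<Rightarrow> nat \<Rightarrow> real^'n \<Rightarrow> real^'n \<Rightarrow> real" where
  "GG U m h1 h2 = (\<Sum>k<m. (afun (U k) h1 - afun (U k) h2)\<^sup>2)"

lemma inj_quant:
  "inj_samples U m \<longleftrightarrow> (\<exists>N::nat. \<forall>h1\<in>Kv. \<forall>h2\<in>Kv. (1 / real (Suc N)) * (norm (h1 - h2))\<^sup>2 \<le> GG U m h1 h2)"
proof
  assume inj: "inj_samples U m"
  interpret O: opt_setting Kv "\<lambda>k. afun (U k)" m
    by (rule opt_setting.intro[OF Kv_0 Kv_add Kv_scale Kv_closed afun_linear])
  have injK: "\<forall>h1\<in>Kv. \<forall>h2\<in>Kv. (\<forall>k<m. afun (U k) h1 = afun (U k) h2) \<longrightarrow> h1 = h2"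
    using inj inj_Kv by blast
  obtain c where c: "c > 0" "\<forall>w\<in>span Kv. c * (norm w)\<^sup>2 \<le> O.g w" using O.quant_bound[OF injK] by blast
  obtain N where N: "inverse (real (Suc N)) < c" using reals_Archimedean[OF c(1)] by blast
  have "(1 / real (Suc N)) * (norm (h1 - h2))\<^sup>2 \<le> GG U m h1 h2" if "h1 \<in> Kv" "h2 \<in> Kv" for h1 h2
  proof -
    have "h1 - h2 \<in> span Kv" using that by (simp add: span_base span_diff)
    then have "c * (norm (h1 - h2))\<^sup>2 \<le> O.g (h1 - h2)" using c by blast
    also have "O.g (h1 - h2) = GG U m h1 h2" by (simp add: O.g_def GG_def afun_diff)
    finally have "c * (norm (h1 - h2))\<^sup>2 \<le> GG U m h1 h2" .
    moreover have "(1 / real (Suc N)) * (norm (h1 - h2))\<^sup>2 \<le> c * (norm (h1 - h2))\<^sup>2"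
      using N by (intro mult_right_mono) (auto simp: inverse_eq_divide)
    ultimately show ?thesis by linarith
  qed
  then show "\<exists>N::nat. \<forall>h1\<in>Kv. \<forall>h2\<in>Kv. (1 / real (Suc N)) * (norm (h1 - h2))\<^sup>2 \<le> GG U m h1 h2" by blast
next
  assume "\<exists>N::nat. \<forall>h1\<in>Kv. \<forall>h2\<in>Kv. (1 / real (Suc N)) * (norm (h1 - h2))\<^sup>2 \<le> GG U m h1 h2"
  then obtain N :: nat where N: "\<forall>h1\<in>Kv. \<forall>h2\<in>Kv. (1 / real (Suc N)) * (norm (h1 - h2))\<^sup>2 \<le> GG U m h1 h2" by blast
  show "inj_samples U m" unfolding inj_Kv
  proof (intro ballI impI)
    fix h1 h2 assume h: "h1 \<in> Kv" "h2 \<in> Kv" and eq: "\<forall>k<m. afun (U k) h1 = afun (U k) h2"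
    have "GG U m h1 h2 = 0" using eq by (simp add: GG_def)
    then have le0: "(1 / real (Suc N)) * (norm (h1 - h2))\<^sup>2 \<le> 0" using N h by metis
    show "h1 = h2"
    proof (rule ccontr)
      assume "h1 \<noteq> h2"
      then have "0 < (norm (h1 - h2))\<^sup>2" by simp
      then have "0 < (1 / real (Suc N)) * (norm (h1 - h2))\<^sup>2" by simp
      then show False using le0 by linarith
    qed
  qed
qed

lemma cont_GG1: "continuous_on S (\<lambda>h1. GG U m h1 h2)"
  unfolding GG_def by (intro continuous_intros cont_afun)
lemma cont_GG2: "continuous_on S (\<lambda>h2. GG U m h1 h2)"
  unfolding GG_def by (intro continuous_intros cont_afun)

lemma dense_extend:
  assumes W: "W \<subseteq> Kv" "Kv \<subseteq> closure W"
    and hW: "\<forall>h1\<in>W. \<forall>h2\<in>W. c * (norm (h1 - h2))\<^sup>2 \<le> GG U m h1 h2"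
  shows "\<forall>h1\<in>Kv. \<forall>h2\<in>Kv. c * (norm (h1 - h2))\<^sup>2 \<le> GG U m h1 h2"
proof -
  have step1: "\<forall>h1\<in>Kv. c * (norm (h1 - h2))\<^sup>2 \<le> GG U m h1 h2" if h2: "h2 \<in> W" for h2
  proof -
    let ?S = "{h1. c * (norm (h1 - h2))\<^sup>2 \<le> GG U m h1 h2}"
    have "closed ?S" by (intro closed_Collect_le continuous_intros cont_GG1)
    moreover have "W \<subseteq> ?S" using hW h2 by auto
    ultimately have "closure W \<subseteq> ?S" by (rule closure_minimal[rotated])
    then show ?thesis using W by auto
  qed
  show ?thesis
  proof (intro ballI)
    fix h1 h2 assume h: "h1 \<in> Kv" "h2 \<in> Kv"
    let ?S = "{h2. c * (norm (h1 - h2))\<^sup>2 \<le> GG U m h1 h2}"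
    have "closed ?S" by (intro closed_Collect_le continuous_intros cont_GG2)
    moreover have "W \<subseteq> ?S" using step1 h(1) by auto
    ultimately have "closure W \<subseteq> ?S" by (rule closure_minimal[rotated])
    then show "c * (norm (h1 - h2))\<^sup>2 \<le> GG U m h1 h2" using W h(2) by auto
  qed
qed

lemma afun_Ph: "h \<in> Kv \<Longrightarrow> afun u h = support_fun (Ph h) u"
  using sf_afun[OF Ph_D, of h u] svv_Ph by simp

lemma inj_measurable:
  "{U \<in> space (PiM {..<m} (\<lambda>_. uniform_sphere)). inj_samples U m} \<in> sets (PiM {..<m} (\<lambda>_. uniform_sphere))"
proof -
  obtain W where W: "countable W" "W \<subseteq> Kv" "Kv \<subseteq> closure W" using separable by blast
  let ?M = "PiM {..<m} (\<lambda>_. uniform_sphere)"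
  have eq: "inj_samples U m \<longleftrightarrow> (\<exists>N::nat. \<forall>p\<in>W \<times> W. (1 / real (Suc N)) * (norm (fst p - snd p))\<^sup>2 \<le>
      (\<Sum>k<m. (support_fun (Ph (fst p)) (U k) - support_fun (Ph (snd p)) (U k))\<^sup>2))" for U
  proof -
    have GGW: "GG U m h1 h2 = (\<Sum>k<m. (support_fun (Ph h1) (U k) - support_fun (Ph h2) (U k))\<^sup>2)"
      if "h1 \<in> Kv" "h2 \<in> Kv" for h1 h2 using that by (simp add: GG_def afun_Ph)
    have "(\<forall>h1\<in>Kv. \<forall>h2\<in>Kv. (1 / real (Suc N)) * (norm (h1 - h2))\<^sup>2 \<le> GG U m h1 h2) \<longleftrightarrow>
          (\<forall>p\<in>W \<times> W. (1 / real (Suc N)) * (norm (fst p - snd p))\<^sup>2 \<le>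
      (\<Sum>k<m. (support_fun (Ph (fst p)) (U k) - support_fun (Ph (snd p)) (U k))\<^sup>2))" for N
    proof
      assume "\<forall>h1\<in>Kv. \<forall>h2\<in>Kv. (1 / real (Suc N)) * (norm (h1 - h2))\<^sup>2 \<le> GG U m h1 h2"
      then show "\<forall>p\<in>W \<times> W. (1 / real (Suc N)) * (norm (fst p - snd p))\<^sup>2 \<le>
        (\<Sum>k<m. (support_fun (Ph (fst p)) (U k) - support_fun (Ph (snd p)) (U k))\<^sup>2)"
        using W(2) GGW by auto
    next
      assume "\<forall>p\<in>W \<times> W. (1 / real (Suc N)) * (norm (fst p - snd p))\<^sup>2 \<le>
        (\<Sum>k<m. (support_fun (Ph (fst p)) (U k) - support_fun (Ph (snd p)) (U k))\<^sup>2)"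
      then have "\<forall>h1\<in>W. \<forall>h2\<in>W. (1 / real (Suc N)) * (norm (h1 - h2))\<^sup>2 \<le> GG U m h1 h2"
        using W(2) GGW by (auto simp: subset_iff)
      then show "\<forall>h1\<in>Kv. \<forall>h2\<in>Kv. (1 / real (Suc N)) * (norm (h1 - h2))\<^sup>2 \<le> GG U m h1 h2"
        by (rule dense_extend[OF W(2,3)])
    qed
    then show ?thesis using inj_quant by simp
  qed
  have meas: "{U \<in> space ?M. (1 / real (Suc N)) * (norm (fst p - snd p))\<^sup>2 \<le>
      (\<Sum>k<m. (support_fun (Ph (fst p)) (U k) - support_fun (Ph (snd p)) (U k))\<^sup>2)} \<in> sets ?M"
    if p: "p \<in> W \<times> W" for N p
  proof -
    have pK: "fst p \<in> Kv" "snd p \<in> Kv" using p W(2) by auto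
    have P1: "compact (Ph (fst p))" "Ph (fst p) \<noteq> {}" and P2: "compact (Ph (snd p))" "Ph (snd p) \<noteq> {}"
      using Ph_polytope[OF pK(1)] Ph_polytope[OF pK(2)] poly_compact poly_ne by blast+
    show ?thesis
      by (intro borel_measurable_le borel_measurable_const borel_measurable_sum borel_measurable_power
          borel_measurable_diff sf_meas P1 P2) auto
  qed
  have "{U \<in> space ?M. inj_samples U m} = {U \<in> space ?M. \<exists>N::nat. \<forall>p\<in>W \<times> W. (1 / real (Suc N)) * (norm (fst p - snd p))\<^sup>2 \<le>
      (\<Sum>k<m. (support_fun (Ph (fst p)) (U k) - support_fun (Ph (snd p)) (U k))\<^sup>2)}"
    using eq by blast
  also have "\<dots> \<in> sets ?M"
    by (intro sets.sets_Collect_countable_Ex sets.sets_Collect_countable_All' meas countable_SIGMA W(1))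
  finally show ?thesis .
qed

end


lemma ball_pos: "0 < r \<Longrightarrow> 0 < emeasure lborel (ball (c::'a::euclidean_space) r)"
  by (simp add: emeasure_ball)

abbreviation B1 :: "'a::euclidean_space set" where "B1 \<equiv> ball 0 1"

lemma nrm_meas: "(\<lambda>x::'a::euclidean_space. x /\<^sub>R norm x) \<in> borel_measurable borel"
  by measurable

lemma nrm_meas': "(\<lambda>x::'a::euclidean_space. x /\<^sub>R norm x) \<in> measurable (uniform_measure lborel B1) borel"
  using nrm_meas by (subst measurable_cong_sets[of _ borel]) auto

lemma prob_B1: "prob_space (uniform_measure lborel (B1 :: 'a::euclidean_space set))"
proof -
  have "0 < emeasure lborel (B1::'a set)" by (rule ball_pos) simp
  moreover have "emeasure lborel (B1::'a set) < \<infinity>" by (rule emeasure_lborel_ball_finite)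
  ultimately show ?thesis by (intro prob_space_uniform_measure) auto
qed

lemma prob_us: "prob_space (uniform_sphere :: 'a::euclidean_space measure)"
  unfolding uniform_sphere_def by (rule prob_space.prob_space_distr[OF prob_B1 nrm_meas'])

lemma us_ball_pos:
  fixes c :: "'a::euclidean_space"
  assumes c: "norm c = 1" and d: "0 < d"
  shows "0 < measure uniform_sphere (ball c d)"
proof -
  let ?f = "\<lambda>x::'a. x /\<^sub>R norm x"
  have cont: "((\<lambda>x. x /\<^sub>R norm x) \<longlongrightarrow> (c /\<^sub>R 2) /\<^sub>R norm (c /\<^sub>R 2)) (nhds (c /\<^sub>R 2))"
    using c by (intro tendsto_intros) (auto intro: filterlim_ident)
  moreover have "(c /\<^sub>R 2) /\<^sub>R norm (c /\<^sub>R 2) = c" using c by simp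
  ultimately have "\<forall>\<^sub>F x in nhds (c /\<^sub>R 2). dist (?f x) c < d"
    using d by (simp add: tendsto_iff)
  moreover have "\<forall>\<^sub>F x in nhds (c /\<^sub>R 2). x \<in> B1"
    by (rule eventually_nhds_in_open) (use c in auto)
  ultimately have "\<forall>\<^sub>F x in nhds (c /\<^sub>R 2). x \<in> B1 \<inter> ?f -` ball c d"
    by eventually_elim (auto simp: dist_commute)
  then obtain r where r: "0 < r" "\<And>x. dist x (c /\<^sub>R 2) < r \<Longrightarrow> x \<in> B1 \<inter> ?f -` ball c d"
    unfolding eventually_nhds_metric by blast
  have sub: "ball (c /\<^sub>R 2) r \<subseteq> B1 \<inter> ?f -` ball c d" using r(2) by (auto simp: dist_commute)
  have setsP: "?f -` ball c d \<in> sets lborel"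
  proof -
    have "?f -` ball c d \<inter> space borel \<in> sets borel" by (rule measurable_sets[OF nrm_meas]) simp
    then show ?thesis by auto
  qed
  have setsA: "B1 \<inter> ?f -` ball c d \<in> sets lborel" using setsP by auto
  have "0 < emeasure lborel (ball (c /\<^sub>R 2) r)" by (rule ball_pos[OF r(1)])
  also have "\<dots> \<le> emeasure lborel (B1 \<inter> ?f -` ball c d)" by (rule emeasure_mono[OF sub setsA])
  finally have pos: "0 < emeasure lborel (B1 \<inter> ?f -` ball c d)" .
  have "emeasure uniform_sphere (ball c d) = emeasure (uniform_measure lborel B1) (?f -` ball c d \<inter> space (uniform_measure lborel B1))"
    unfolding uniform_sphere_def by (rule emeasure_distr[OF nrm_meas']) simp
  also have "\<dots> = emeasure lborel (B1 \<inter> (?f -` ball c d)) / emeasure lborel (B1::'a set)"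
    by (simp add: emeasure_uniform_measure[OF _ setsP])
  finally have "0 < emeasure uniform_sphere (ball c d)"
    using pos emeasure_lborel_ball_finite[of 0 1] by (simp add: ennreal_zero_less_divide)
  then show ?thesis
    using finite_measure.emeasure_eq_measure[OF prob_space.finite_measure[OF prob_us], of "ball c d"] by simp
qed

lemma diag_dom:
  fixes w :: "real^'n" and c :: "'n \<Rightarrow> 'n \<Rightarrow> real"
  assumes row: "\<And>i. (\<Sum>j\<in>UNIV. c i j * w $ j) = 0" and diag: "\<And>i. \<alpha> \<le> c i i"
    and off: "\<And>i j. j \<noteq> i \<Longrightarrow> \<bar>c i j\<bar> \<le> e" and lt: "real CARD('n) * e < \<alpha>" and e0: "0 \<le> e"
  shows "w = 0"
proof -
  let ?M = "Max (range (\<lambda>j. \<bar>w $ j\<bar>))"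
  have "?M \<in> range (\<lambda>j. \<bar>w $ j\<bar>)" by (rule Max_in) auto
  then obtain i0 where "?M = \<bar>w $ i0\<bar>" by (rule rangeE)
  then have i0: "\<bar>w $ i0\<bar> = ?M" by simp
  have mx: "\<bar>w $ j\<bar> \<le> \<bar>w $ i0\<bar>" for j using i0 by (simp add: Max_ge)
  have "c i0 i0 * w $ i0 + (\<Sum>j\<in>UNIV - {i0}. c i0 j * w $ j) = 0"
    using row[of i0] by (simp add: sum.remove[of UNIV i0])
  then have "\<bar>c i0 i0 * w $ i0\<bar> = \<bar>\<Sum>j\<in>UNIV - {i0}. c i0 j * w $ j\<bar>" by linarith
  also have "\<dots> \<le> (\<Sum>j\<in>UNIV - {i0}. \<bar>c i0 j\<bar> * \<bar>w $ j\<bar>)"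
    by (rule order_trans[OF sum_abs]) (simp add: abs_mult)
  also have "\<dots> \<le> (\<Sum>j\<in>UNIV - {i0}. e * \<bar>w $ i0\<bar>)"
    by (intro sum_mono mult_mono off mx) (auto simp: e0)
  also have "\<dots> \<le> (\<Sum>j\<in>(UNIV::'n set). e * \<bar>w $ i0\<bar>)"
    by (rule sum_mono2) (auto simp: e0)
  also have "\<dots> = real CARD('n) * e * \<bar>w $ i0\<bar>" by simp
  finally have A: "\<bar>c i0 i0 * w $ i0\<bar> \<le> real CARD('n) * e * \<bar>w $ i0\<bar>" .
  have a0: "0 \<le> \<alpha>" using lt e0 by (smt (verit) mult_nonneg_nonneg of_nat_0_le_iff)
  have "\<alpha> * \<bar>w $ i0\<bar> \<le> c i0 i0 * \<bar>w $ i0\<bar>" using diag[of i0] by (simp add: mult_right_mono)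
  also have "\<dots> = \<bar>c i0 i0 * w $ i0\<bar>" using diag[of i0] a0 by (simp add: abs_mult)
  finally have "\<alpha> * \<bar>w $ i0\<bar> \<le> real CARD('n) * e * \<bar>w $ i0\<bar>" using A by linarith
  then have "(\<alpha> - real CARD('n) * e) * \<bar>w $ i0\<bar> \<le> 0" by (simp add: algebra_simps)
  then have "\<bar>w $ i0\<bar> \<le> 0" using lt by (simp add: mult_le_0_iff)
  then have "\<forall>j. w $ j = 0" using mx by (metis abs_le_zero_iff order_trans)
  then show ?thesis by (simp add: vec_eq_iff)
qed


context fan_setting begin

definition Mv :: real where "Mv = (\<Sum>i\<in>UNIV. norm (v i))"
definition epsv :: real where "epsv = 1 / (4 * real CARD('n) * Mv)"
definition vh :: "'n \<Rightarrow> 'a" where "vh i = v i /\<^sub>R norm (v i)"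

lemma norm_le_Mv: "norm (v i) \<le> Mv"
  unfolding Mv_def by (rule member_le_sum) auto

lemma Mv_pos: "0 < Mv"
proof -
  have "0 < norm (v undefined)" using v_nz by simp
  then show ?thesis using norm_le_Mv[of undefined] by linarith
qed

lemma epsv_pos: "0 < epsv" using Mv_pos by (simp add: epsv_def)

lemma norm_vh: "norm (vh i) = 1" using v_nz by (simp add: vh_def)

lemma z_vh: "chamber J \<Longrightarrow> i \<in> J \<Longrightarrow> j \<in> J \<Longrightarrow> z J j \<bullet> vh i = (if i = j then 1 / norm (v i) else 0)"
  by (simp add: vh_def chamber_z divide_inverse)

lemma vh_notin: assumes J: "chamber J" "i \<notin> J" shows "vh i \<notin> cone J"
proof
  assume "vh i \<in> cone J"
  then have "norm (v i) *\<^sub>R vh i \<in> cone J" by (simp add: cone_def convex_cone_hull_mul)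
  then have "v i \<in> cone J" using v_nz by (simp add: vh_def)
  then show False using v_in_cone_imp[OF J(1)] J(2) by blast
qed

lemma good_nbhd: "\<exists>\<delta>>0. \<forall>u. dist u (vh i) < \<delta> \<longrightarrow>
   (\<exists>J. chamber J \<and> i \<in> J \<and> u \<in> cone J \<and> (\<forall>j\<in>J. \<bar>z J j \<bullet> u - z J j \<bullet> vh i\<bar> < epsv))"
proof -
  have E1: "\<forall>\<^sub>F u in nhds (vh i). \<forall>J\<in>{J. chamber J \<and> i \<notin> J}. u \<notin> cone J"
  proof (rule eventually_ball_finite)
    show "\<forall>J\<in>{J. chamber J \<and> i \<notin> J}. \<forall>\<^sub>F u in nhds (vh i). u \<notin> cone J"
    proof
      fix J assume "J \<in> {J. chamber J \<and> i \<notin> J}"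
      then have J: "chamber J" "i \<notin> J" by auto
      have "\<forall>\<^sub>F u in nhds (vh i). u \<in> - cone J"
        by (rule eventually_nhds_in_open) (use closed_cone[OF J(1)] vh_notin[OF J] in auto)
      then show "\<forall>\<^sub>F u in nhds (vh i). u \<notin> cone J" by simp
    qed
  qed simp
  have E2: "\<forall>\<^sub>F u in nhds (vh i). \<forall>J\<in>{J. chamber J}. \<forall>j\<in>J. \<bar>z J j \<bullet> u - z J j \<bullet> vh i\<bar> < epsv"
  proof (rule eventually_ball_finite)
    show "\<forall>J\<in>{J. chamber J}. \<forall>\<^sub>F u in nhds (vh i). \<forall>j\<in>J. \<bar>z J j \<bullet> u - z J j \<bullet> vh i\<bar> < epsv"
    proof
      fix J
      show "\<forall>\<^sub>F u in nhds (vh i). \<forall>j\<in>J. \<bar>z J j \<bullet> u - z J j \<bullet> vh i\<bar> < epsv"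
      proof (rule eventually_ball_finite)
        show "\<forall>j\<in>J. \<forall>\<^sub>F u in nhds (vh i). \<bar>z J j \<bullet> u - z J j \<bullet> vh i\<bar> < epsv"
        proof
          fix j
          have "((\<lambda>u. z J j \<bullet> u) \<longlongrightarrow> z J j \<bullet> vh i) (nhds (vh i))"
            by (intro tendsto_intros) (auto intro: filterlim_ident)
          from tendstoD[OF this epsv_pos]
          show "\<forall>\<^sub>F u in nhds (vh i). \<bar>z J j \<bullet> u - z J j \<bullet> vh i\<bar> < epsv"
            by (simp add: dist_real_def)
        qed
      qed simp
    qed
  qed simp
  have "\<forall>\<^sub>F u in nhds (vh i). \<exists>J. chamber J \<and> i \<in> J \<and> u \<in> cone J \<and> (\<forall>j\<in>J. \<bar>z J j \<bullet> u - z J j \<bullet> vh i\<bar> < epsv)"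
    using E1 E2
  proof eventually_elim
    case (elim u)
    obtain J where J: "chamber J" "u \<in> cone J" using cover by blast
    then have "i \<in> J" using elim(1) by blast
    then show ?case using J elim(2) by blast
  qed
  then show ?thesis unfolding eventually_nhds_metric by blast
qed

definition dlt :: "'n \<Rightarrow> real" where
  "dlt i = (SOME \<delta>. \<delta> > 0 \<and> (\<forall>u. dist u (vh i) < \<delta> \<longrightarrow>
   (\<exists>J. chamber J \<and> i \<in> J \<and> u \<in> cone J \<and> (\<forall>j\<in>J. \<bar>z J j \<bullet> u - z J j \<bullet> vh i\<bar> < epsv))))"

lemma dlt: "dlt i > 0 \<and> (\<forall>u. dist u (vh i) < dlt i \<longrightarrow>
   (\<exists>J. chamber J \<and> i \<in> J \<and> u \<in> cone J \<and> (\<forall>j\<in>J. \<bar>z J j \<bullet> u - z J j \<bullet> vh i\<bar> < epsv)))"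
  unfolding dlt_def by (rule someI_ex) (use good_nbhd in blast)

lemma good_inj:
  assumes good: "\<forall>i. \<exists>k<m. U k \<in> ball (vh i) (dlt i)"
  shows "inj_samples U m"
  unfolding inj_Kv
proof (intro ballI impI)
  fix h1 h2 assume h: "h1 \<in> Kv" "h2 \<in> Kv" and eq: "\<forall>k<m. afun (U k) h1 = afun (U k) h2"
  have "\<forall>i. \<exists>p. fst p < m \<and> chamber (snd p) \<and> i \<in> snd p \<and> U (fst p) \<in> cone (snd p) \<and>
      (\<forall>j\<in>snd p. \<bar>z (snd p) j \<bullet> U (fst p) - z (snd p) j \<bullet> vh i\<bar> < epsv)"
  proof
    fix i
    obtain k where k: "k < m" "U k \<in> ball (vh i) (dlt i)" using good by blast
    then obtain J where "chamber J \<and> i \<in> J \<and> U k \<in> cone J \<and> (\<forall>j\<in>J. \<bar>z J j \<bullet> U k - z J j \<bullet> vh i\<bar> < epsv)"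
      using dlt[of i] by (auto simp: dist_commute)
    then show "\<exists>p. fst p < m \<and> chamber (snd p) \<and> i \<in> snd p \<and> U (fst p) \<in> cone (snd p) \<and>
      (\<forall>j\<in>snd p. \<bar>z (snd p) j \<bullet> U (fst p) - z (snd p) j \<bullet> vh i\<bar> < epsv)"
      using k by (intro exI[of _ "(k, J)"]) auto
  qed
  then obtain f where f: "\<And>i. fst (f i) < m \<and> chamber (snd (f i)) \<and> i \<in> snd (f i) \<and> U (fst (f i)) \<in> cone (snd (f i)) \<and>
      (\<forall>j\<in>snd (f i). \<bar>z (snd (f i)) j \<bullet> U (fst (f i)) - z (snd (f i)) j \<bullet> vh i\<bar> < epsv)"
    by (metis choice)
  define c where "c i j = (if j \<in> snd (f i) then z (snd (f i)) j \<bullet> U (fst (f i)) else 0)" for i j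
  define w where "w = h1 - h2"
  have afun_expand: "afun (U (fst (f i))) h = (\<Sum>j\<in>snd (f i). (z (snd (f i)) j \<bullet> U (fst (f i))) * h $ j)"
    if "h \<in> Kv" for h i
  proof -
    have "afun (U (fst (f i))) h = support_fun (Ph h) (U (fst (f i)))" by (rule afun_Ph[OF that])
    also have "\<dots> = (\<Sum>j\<in>snd (f i). (z (snd (f i)) j \<bullet> U (fst (f i))) * svv (Ph h) $ j)"
      using f[of i] by (intro sf_svv Ph_D that) auto
    finally show ?thesis using svv_Ph[OF that] by simp
  qed
  have row: "(\<Sum>j\<in>UNIV. c i j * w $ j) = 0" for i
  proof -
    have "(\<Sum>j\<in>UNIV. c i j * w $ j) = (\<Sum>j\<in>UNIV. if j \<in> snd (f i) then (z (snd (f i)) j \<bullet> U (fst (f i))) * w $ j else 0)"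
      by (rule sum.cong) (auto simp: c_def)
    also have "\<dots> = (\<Sum>j\<in>UNIV \<inter> snd (f i). (z (snd (f i)) j \<bullet> U (fst (f i))) * w $ j)"
      by (rule sum.inter_restrict[symmetric]) simp
    also have "\<dots> = (\<Sum>j\<in>snd (f i). (z (snd (f i)) j \<bullet> U (fst (f i))) * w $ j)" by simp
    also have "\<dots> = afun (U (fst (f i))) h1 - afun (U (fst (f i))) h2"
      by (simp add: afun_expand h w_def right_diff_distrib sum_subtractf)
    also have "\<dots> = 0" using eq f[of i] by simp
    finally show ?thesis .
  qed
  define \<alpha> where "\<alpha> = 1 / Mv - epsv"
  have diag: "\<alpha> \<le> c i i" for i
  proof -
    let ?J = "snd (f i)" and ?u = "U (fst (f i))"
    have iJ: "i \<in> ?J" and ch: "chamber ?J" using f[of i] by auto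
    have "\<bar>z ?J i \<bullet> ?u - z ?J i \<bullet> vh i\<bar> < epsv" using f[of i] by blast
    moreover have "z ?J i \<bullet> vh i = 1 / norm (v i)" using z_vh[OF ch iJ iJ] by simp
    moreover have "1 / Mv \<le> 1 / norm (v i)" using norm_le_Mv[of i] v_nz[of i]
      by (simp add: frac_le)
    ultimately show ?thesis using iJ by (simp add: c_def \<alpha>_def)
  qed
  have off: "\<bar>c i j\<bar> \<le> epsv" if "j \<noteq> i" for i j
  proof (cases "j \<in> snd (f i)")
    case True
    let ?J = "snd (f i)" and ?u = "U (fst (f i))"
    have iJ: "i \<in> ?J" and ch: "chamber ?J" using f[of i] by auto
    have "\<bar>z ?J j \<bullet> ?u - z ?J j \<bullet> vh i\<bar> < epsv" using f[of i] True by blast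
    moreover have "z ?J j \<bullet> vh i = 0" using z_vh[OF ch iJ True] that by simp
    ultimately show ?thesis using True by (simp add: c_def)
  next
    case False then show ?thesis using epsv_pos by (simp add: c_def)
  qed
  have lt: "real CARD('n) * epsv < \<alpha>"
  proof -
    have n1: "1 \<le> real CARD('n)" by simp
    have e1: "real CARD('n) * epsv = 1 / (4 * Mv)" using Mv_pos by (simp add: epsv_def)
    have "epsv \<le> 1 / (4 * Mv)" using Mv_pos n1 unfolding epsv_def by (simp add: frac_le)
    then show ?thesis using e1 Mv_pos by (simp add: \<alpha>_def field_simps)
  qed
  have "w = 0" by (rule diag_dom[OF row diag off lt]) (use epsv_pos in auto)
  then show "h1 = h2" by (simp add: w_def)
qed

end


context fan_setting begin

definition pp :: "'n \<Rightarrow> real" where "pp i = measure uniform_sphere (ball (vh i) (dlt i))"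

lemma pp_pos: "0 < pp i"
  unfolding pp_def by (rule us_ball_pos[OF norm_vh]) (use dlt in blast)

lemma pp_le1: "pp i \<le> 1"
  unfolding pp_def by (rule prob_space.prob_le_1[OF prob_us])

definition Egood :: "nat \<Rightarrow> (nat \<Rightarrow> 'a) set" where
  "Egood m = {U \<in> space (PiM {..<m} (\<lambda>_. uniform_sphere)). \<forall>i. \<exists>k\<in>{..<m}. U k \<in> ball (vh i) (dlt i)}"

lemma comp_sets:
  fixes B :: "'a set"
  assumes "k < m" "B \<in> sets borel"
  shows "{U \<in> space (PiM {..<m} (\<lambda>_. uniform_sphere)). U k \<in> B} \<in> sets (PiM {..<m} (\<lambda>_. uniform_sphere))"
proof -
  have "(\<lambda>U. U k) \<in> measurable (PiM {..<m} (\<lambda>_. uniform_sphere)) uniform_sphere"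
    using measurable_component_singleton[of k "{..<m}" "\<lambda>_. uniform_sphere"] assms(1) by simp
  moreover have "B \<in> sets (uniform_sphere::'a measure)" using assms(2) by (simp add: sets_us)
  ultimately have "(\<lambda>U. U k) -` B \<inter> space (PiM {..<m} (\<lambda>_. uniform_sphere)) \<in> sets (PiM {..<m} (\<lambda>_. uniform_sphere))"
    by (rule measurable_sets)
  moreover have "{U \<in> space (PiM {..<m} (\<lambda>_. uniform_sphere)). U k \<in> B} = (\<lambda>U. U k) -` B \<inter> space (PiM {..<m} (\<lambda>_. uniform_sphere))"
    by auto
  ultimately show ?thesis by simp
qed

lemma Egood_sets: "Egood m \<in> sets (PiM {..<m} (\<lambda>_. uniform_sphere))"
  unfolding Egood_def
  by (intro sets.sets_Collect_countable_All sets.sets_Collect_countable_Ex' comp_sets) auto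

lemma Egood_inj: "U \<in> Egood m \<Longrightarrow> inj_samples U m"
  by (rule good_inj) (auto simp: Egood_def)

lemma Egood_bound: "1 - (\<Sum>i\<in>UNIV. (1 - pp i) ^ m) \<le> measure (PiM {..<m} (\<lambda>_. uniform_sphere)) (Egood m)"
proof -
  let ?M = "PiM {..<m} (\<lambda>_. uniform_sphere)"
  interpret PP: product_prob_space "\<lambda>_. uniform_sphere" "{..<m}"
    by (simp add: product_prob_space_def product_sigma_finite_def product_prob_space_axioms_def
        prob_us prob_space_imp_sigma_finite)
  define A where "A i = {U \<in> space ?M. \<forall>k\<in>{..<m}. U k \<in> UNIV - ball (vh i) (dlt i)}" for i
  have Asets: "A i \<in> sets ?M" for i
    unfolding A_def by (intro sets.sets_Collect_countable_All' comp_sets) auto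
  have mA: "measure ?M (A i) = (1 - pp i) ^ m" for i
  proof -
    have "emeasure ?M (A i) = (\<Prod>k\<in>{..<m}. emeasure uniform_sphere (UNIV - ball (vh i) (dlt i)))"
      unfolding A_def by (rule PP.emeasure_PiM_Collect) (auto simp: sets_us)
    also have "emeasure uniform_sphere (UNIV - ball (vh i) (dlt i)) = ennreal (1 - pp i)"
    proof -
      have "measure uniform_sphere (space uniform_sphere - ball (vh i) (dlt i)) = 1 - pp i"
        unfolding pp_def by (rule prob_space.prob_compl[OF prob_us]) (simp add: sets_us)
      then have m1: "measure uniform_sphere (UNIV - ball (vh i) (dlt i)) = 1 - pp i" by (simp only: space_us)
      have "emeasure uniform_sphere (UNIV - ball (vh i) (dlt i)) = ennreal (measure uniform_sphere (UNIV - ball (vh i) (dlt i)))"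
        by (rule finite_measure.emeasure_eq_measure[OF prob_space.finite_measure[OF prob_us]])
      then show ?thesis by (simp only: m1)
    qed
    also have "(\<Prod>k\<in>{..<m}. ennreal (1 - pp i)) = ennreal ((1 - pp i) ^ m)"
      using pp_le1[of i] by (simp add: prod_ennreal ennreal_power)
    finally have "emeasure ?M (A i) = ennreal ((1 - pp i) ^ m)" .
    then show ?thesis using pp_le1[of i] by (simp add: measure_def)
  qed
  have sub: "space ?M - Egood m \<subseteq> (\<Union>i. A i)" by (auto simp: Egood_def A_def)
  have "measure ?M (space ?M - Egood m) \<le> measure ?M (\<Union>i. A i)"
    by (rule PP.P.finite_measure_mono[OF sub]) (use Asets in auto)
  also have "\<dots> \<le> (\<Sum>i\<in>UNIV. measure ?M (A i))"
    by (rule PP.P.finite_measure_subadditive_finite) (use Asets in auto)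
  also have "\<dots> = (\<Sum>i\<in>UNIV. (1 - pp i) ^ m)" by (simp add: mA)
  finally have "measure ?M (space ?M - Egood m) \<le> (\<Sum>i\<in>UNIV. (1 - pp i) ^ m)" .
  moreover have "measure ?M (space ?M - Egood m) = 1 - measure ?M (Egood m)"
    by (rule PP.P.prob_compl[OF Egood_sets])
  ultimately show ?thesis by linarith
qed

end

theorem proposition4p1:
  fixes F :: "'a::euclidean_space set set" and v :: "'n::finite \<Rightarrow> 'a"
  assumes "simplicial_fan F" and "polytopal_fan F"
    and "bij_betw (\<lambda>i. convex_cone hull {v i}) UNIV (fan_rays F)"
  shows "(\<lambda>m. measure (PiM {..<m} (\<lambda>_. uniform_sphere))
            {U \<in> space (PiM {..<m} (\<lambda>_. uniform_sphere)).
               \<forall>y. card (lse F v U m y) = 1}) \<longlonglongrightarrow> 1"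
proof -
  interpret fan_setting F v using assms by (rule fan_setting.intro)
  let ?M = "\<lambda>m. PiM {..<m} (\<lambda>_. uniform_sphere)"
  let ?S = "\<lambda>m. {U \<in> space (?M m). \<forall>y. card (lse F v U m y) = 1}"
  have lower: "\<forall>\<^sub>F m in sequentially. 1 - (\<Sum>i\<in>UNIV. (1 - pp i) ^ m) \<le> measure (?M m) (?S m)"
  proof (rule eventually_sequentiallyI[of 1])
    fix m :: nat assume m: "1 \<le> m"
    have eqS: "?S m = {U \<in> space (?M m). inj_samples U m}" using all_y_iff[of m] m by auto
    interpret PP: product_prob_space "\<lambda>_. uniform_sphere" "{..<m}"
      by (simp add: product_prob_space_def product_sigma_finite_def product_prob_space_axioms_def
          prob_us prob_space_imp_sigma_finite)
    have "Egood m \<subseteq> ?S m" unfolding eqS using Egood_inj by (auto simp: Egood_def)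
    then have "measure (?M m) (Egood m) \<le> measure (?M m) (?S m)"
      unfolding eqS by (rule PP.P.finite_measure_mono[OF _ inj_measurable])
    then show "1 - (\<Sum>i\<in>UNIV. (1 - pp i) ^ m) \<le> measure (?M m) (?S m)"
      using Egood_bound[of m] by linarith
  qed
  have upper: "\<forall>\<^sub>F m in sequentially. measure (?M m) (?S m) \<le> 1"
  proof (rule always_eventually, rule allI)
    fix m :: nat
    interpret PP: product_prob_space "\<lambda>_. uniform_sphere" "{..<m}"
      by (simp add: product_prob_space_def product_sigma_finite_def product_prob_space_axioms_def
          prob_us prob_space_imp_sigma_finite)
    show "measure (?M m) (?S m) \<le> 1" by (rule PP.P.prob_le_1)
  qed
  have lim: "(\<lambda>m. 1 - (\<Sum>i\<in>UNIV. (1 - pp i) ^ m)) \<longlonglongrightarrow> 1 - (\<Sum>i\<in>(UNIV::'n set). 0)"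
  proof (intro tendsto_intros)
    fix i :: 'n
    show "norm (1 - pp i) < 1" using pp_pos[of i] pp_le1[of i] by simp
  qed
  then have lim': "(\<lambda>m. 1 - (\<Sum>i\<in>UNIV. (1 - pp i) ^ m)) \<longlonglongrightarrow> 1" by simp
  show ?thesis by (rule tendsto_sandwich[OF lower upper lim' tendsto_const])
qed


end
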